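(* There exists a finite set of prototiles $\mathcal{F}$ in $\mathbb{R}^2$ such that for every $q\in\mathbb{N}$ there exist $q$ primitive substitution rules $\varrho_1,\dots,\varrho_q$ on $\mathcal{F}$, all with the same substitution matrix, and tilings $\mathcal{T}_1,\dots,\mathcal{T}_q$ with $\mathcal{T}_i\in\mathbb{X}_{\varrho_i}$, such that the Delone sets associated with $\mathcal{T}_1,\dots,\mathcal{T}_q$ are pairwise BD non-equivalent.
   Context: A Delone set in $\mathbb{R}^d$ is a set $\Lambda$ for which there are $r,R>0$ such that every ball of radius $r$ contains at most one point of $\Lambda$ and every ball of radius $R$ contains at least one. Two Delone sets $\Lambda,\Lambda'$ are BD equivalent if there exist $\alpha>0$ and a bijection $\phi:\Lambda\to\alpha\Lambda'$ with $\sup_{x}\|x-\phi(x)\|<\infty$. Tiles are compact sets equal to the closure of their interior; patches are tessellations of bounded sets by tiles with pairwise disjoint interiors, tilings are tessellations of $\mathbb{R}^d$. $\mathcal{F}=\{T_1,\dots,T_n\}$ is a finite set of prototiles and $\mathcal{F}^*$ the set of patches of translates of prototiles up to translation. A substitution rule with inflation factor $\xi>1$ is a map $\varrho:\mathcal{F}\to\mathcal{F}^*$ with $\operatorname{supp}\varrho(T_i)=\xi T_i$, extended to patches tile by tile ($T_i+t\mapsto\varrho(T_i)+\xi t$). $\mathbb{X}_\varrho$ is the set of tilings of $\mathbb{R}^d$ all of whose finite patches are translates of sub-patches of some $\varrho^m(T)$, $m\in\mathbb{N}$, $T\in\mathcal{F}$. The substitution matrix $M_\varrho$ has entries $a_{ij}=$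 number of tiles of type $i$ in $\varrho(T_j)$; $\varrho$ is primitive if some power of $M_\varrho$ is strictly positive. A Delone set is associated with a tiling if it is obtained by choosing one point in each tile, distinct tiles giving distinct points. *)

theory Defs
  imports "HOL-Analysis.Analysis"
begin

type_synonym pt = "real^2"

definition is_tile :: "pt set \<Rightarrow> bool" where
  "is_tile T \<longleftrightarrow> compact T \<and> T \<noteq> {} \<and> closure (interior T) = T"

text \<open>Prototiles: a finite list F of tiles; the type of a prototile is its index.
  A placed tile is a pair (i, t) meaning the translate F!i + t.\<close>
definition prototiles :: "pt set list \<Rightarrow> bool" where
  "prototiles F \<longleftrightarrow> (\<forall>T\<in>set F. is_tile T)"

definition placed :: "pt set list \<Rightarrow> nat \<times> pt \<Rightarrow> pt set" where
  "placed F p = (\<lambda>x. x + snd p) ` (F ! fst p)"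

definition supp :: "pt set list \<Rightarrow> (nat \<times> pt) set \<Rightarrow> pt set" where
  "supp F P = (\<Union>p\<in>P. placed F p)"

definition tess :: "pt set list \<Rightarrow> (nat \<times> pt) set \<Rightarrow> bool" where
  "tess F P \<longleftrightarrow> (\<forall>p\<in>P. fst p < length F) \<and>
     (\<forall>p\<in>P. \<forall>p'\<in>P. p \<noteq> p' \<longrightarrow> interior (placed F p) \<inter> interior (placed F p') = {})"

definition is_patch :: "pt set list \<Rightarrow> (nat \<times> pt) set \<Rightarrow> bool" where
  "is_patch F P \<longleftrightarrow> finite P \<and> tess F P"

definition is_tiling :: "pt set list \<Rightarrow> (nat \<times> pt) set \<Rightarrow> bool" where
  "is_tiling F P \<longleftrightarrow> tess F P \<and> supp F P = UNIV"

definition subst_rule :: "pt set list \<Rightarrow> real \<Rightarrow> (nat \<Rightarrow> (nat \<times> pt) set) \<Rightarrow> bool" where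
  "subst_rule F xi rho \<longleftrightarrow> xi > 1 \<and>
     (\<forall>i<length F. is_patch F (rho i) \<and> supp F (rho i) = (\<lambda>x. xi *\<^sub>R x) ` (F ! i))"

definition subst_ext :: "real \<Rightarrow> (nat \<Rightarrow> (nat \<times> pt) set) \<Rightarrow> (nat \<times> pt) set \<Rightarrow> (nat \<times> pt) set" where
  "subst_ext xi rho P = (\<Union>(i, t)\<in>P. (\<lambda>(j, s). (j, s + xi *\<^sub>R t)) ` rho i)"

definition translate_patch :: "pt \<Rightarrow> (nat \<times> pt) set \<Rightarrow> (nat \<times> pt) set" where
  "translate_patch v P = (\<lambda>(i, t). (i, t + v)) ` P"

definition X_subst :: "pt set list \<Rightarrow> real \<Rightarrow> (nat \<Rightarrow> (nat \<times> pt) set) \<Rightarrow> (nat \<times> pt) set set" where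
  "X_subst F xi rho = {T. is_tiling F T \<and>
     (\<forall>P. P \<subseteq> T \<and> finite P \<longrightarrow>
        (\<exists>m j v. j < length F \<and> translate_patch v P \<subseteq> (subst_ext xi rho ^^ m) {(j, 0)}))}"

definition subst_matrix :: "(nat \<Rightarrow> (nat \<times> pt) set) \<Rightarrow> nat \<Rightarrow> nat \<Rightarrow> nat" where
  "subst_matrix rho i j = card {t. (i, t) \<in> rho j}"

fun mat_pow :: "nat \<Rightarrow> (nat \<Rightarrow> nat \<Rightarrow> nat) \<Rightarrow> nat \<Rightarrow> nat \<Rightarrow> nat \<Rightarrow> nat" where
  "mat_pow n M 0 i j = (if i = j then 1 else 0)"
| "mat_pow n M (Suc k) i j = (\<Sum>l<n. mat_pow n M k i l * M l j)"

definition primitive :: "pt set list \<Rightarrow> (nat \<Rightarrow> (nat \<times> pt) set) \<Rightarrow> bool" where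
  "primitive F rho \<longleftrightarrow> (\<exists>k. \<forall>i<length F. \<forall>j<length F. mat_pow (length F) (subst_matrix rho) k i j > 0)"

definition associated_delone :: "pt set list \<Rightarrow> (nat \<times> pt) set \<Rightarrow> pt set \<Rightarrow> bool" where
  "associated_delone F T L \<longleftrightarrow> (\<exists>c. inj_on c T \<and> (\<forall>p\<in>T. c p \<in> placed F p) \<and> L = c ` T)"

definition BD_equiv :: "pt set \<Rightarrow> pt set \<Rightarrow> bool" where
  "BD_equiv L L' \<longleftrightarrow> (\<exists>\<alpha>>0. \<exists>\<phi>. bij_betw \<phi> L ((\<lambda>x. \<alpha> *\<^sub>R x) ` L') \<and>
      (\<exists>C. \<forall>x\<in>L. norm (x - \<phi> x) \<le> C))"

end

theory Submission
  imports Defs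
begin


definition tlen :: "nat \<Rightarrow> nat" where "tlen a = (if a = 0 then 2 else 1)"
definition lenp :: "nat list \<Rightarrow> nat" where "lenp w = sum_list (map tlen w)"
definition phi :: "nat \<Rightarrow> nat list \<Rightarrow> int" where
  "phi Q w = sum_list (map (\<lambda>a. if a = 0 then - int Q else 1) w)"
definition NN :: "nat \<Rightarrow> nat" where "NN Q = 2*Q+3"
definition prefA :: "nat \<Rightarrow> nat \<Rightarrow> nat list" where
  "prefA Q k = [0,0] @ replicate (2*k) 1 @ replicate (Q-k) 0"
definition restA :: "nat \<Rightarrow> nat \<Rightarrow> nat list" where
  "restA Q k = replicate (2*(Q-k)) 1 @ replicate (k+1) 0"
definition wA :: "nat \<Rightarrow> nat \<Rightarrow> nat list" where "wA Q k = prefA Q k @ restA Q k"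
definition wB :: "nat \<Rightarrow> nat list" where "wB Q = 0 # replicate (2*Q+1) 1"
definition sg :: "nat \<Rightarrow> nat \<Rightarrow> nat \<Rightarrow> nat list" where
  "sg Q k a = (if a = 0 then wA Q k else wB Q)"
definition sgw :: "nat \<Rightarrow> nat \<Rightarrow> nat list \<Rightarrow> nat list" where
  "sgw Q k w = concat (map (sg Q k) w)"
definition W :: "nat \<Rightarrow> nat \<Rightarrow> nat \<Rightarrow> nat list" where "W Q k m = (sgw Q k ^^ m) [0]"

lemma tlen_ge1: "tlen a \<ge> 1" and tlen_le2: "tlen a \<le> 2"
  by (auto simp: tlen_def)

lemma lenp_simps[simp]: "lenp [] = 0" "lenp (a # w) = tlen a + lenp w" "lenp (u @ v) = lenp u + lenp v"
  by (auto simp: lenp_def)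
lemma phi_simps[simp]: "phi Q [] = 0" "phi Q (a # w) = (if a = 0 then - int Q else 1) + phi Q w"
  "phi Q (u @ v) = phi Q u + phi Q v"
  by (auto simp: phi_def)

lemma lenp_rep1[simp]: "lenp (replicate n (Suc 0)) = n" by (induction n) (auto simp: tlen_def)
lemma lenp_rep0[simp]: "lenp (replicate n 0) = 2*n" by (induction n) (auto simp: tlen_def)
lemma phi_rep1[simp]: "phi Q (replicate n (Suc 0)) = int n" by (induction n) auto
lemma phi_rep0[simp]: "phi Q (replicate n 0) = - int Q * int n" by (induction n) (auto simp: algebra_simps)

lemma sgw_simps[simp]: "sgw Q k [] = []" "sgw Q k (a # w) = sg Q k a @ sgw Q k w"
  "sgw Q k (u @ v) = sgw Q k u @ sgw Q k v"
  by (auto simp: sgw_def)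

lemma sgw_pow_append: "(sgw Q k ^^ m) (u @ v) = (sgw Q k ^^ m) u @ (sgw Q k ^^ m) v"
  by (induction m) auto

lemma lenp_sg: "k \<le> Q \<Longrightarrow> lenp (sg Q k a) = NN Q * tlen a"
  by (auto simp: sg_def wA_def wB_def prefA_def restA_def NN_def tlen_def)

lemma lenp_sgw: "k \<le> Q \<Longrightarrow> lenp (sgw Q k w) = NN Q * lenp w"
  by (induction w) (auto simp: lenp_sg algebra_simps)

lemma lenp_sgw_pow: "k \<le> Q \<Longrightarrow> lenp ((sgw Q k ^^ m) w) = NN Q ^ m * lenp w"
  by (induction m) (auto simp: lenp_sgw)

lemma phi_sg: "k \<le> Q \<Longrightarrow> phi Q (sg Q k a) = (int Q + 1) * (if a = 0 then - int Q else 1)"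
  by (auto simp: sg_def wA_def wB_def prefA_def restA_def algebra_simps of_nat_diff)

lemma phi_sgw: "k \<le> Q \<Longrightarrow> phi Q (sgw Q k w) = (int Q + 1) * phi Q w"
  by (induction w) (auto simp: phi_sg algebra_simps)

lemma phi_sgw_pow: "k \<le> Q \<Longrightarrow> phi Q ((sgw Q k ^^ m) w) = (int Q + 1) ^ m * phi Q w"
  by (induction m) (auto simp: phi_sgw)

lemma len_rel: "(int Q + 2) * int (length w) = (int Q + 1) * int (lenp w) + phi Q w"
  by (induction w) (auto simp: tlen_def algebra_simps)

lemma letters_sg: "set (sg Q k a) \<subseteq> {0, 1}"
  by (auto simp: sg_def wA_def wB_def prefA_def restA_def)

lemma letters_sgw_pow: "set w \<subseteq> {0,1} \<Longrightarrow> set ((sgw Q k ^^ m) w) \<subseteq> {0, 1}"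
proof (induction m)
  case (Suc m)
  then show ?case using letters_sg[of Q k] by (simp add: sgw_def) blast
qed auto

lemma letters_W: "set (W Q k m) \<subseteq> {0, 1}"
  unfolding W_def by (rule letters_sgw_pow) auto

lemma W_Suc: "W Q k (Suc m) = (sgw Q k ^^ m) (wA Q k)"
  unfolding W_def by (simp only: funpow_Suc_right comp_def) (simp add: sg_def)

lemma W_Suc2: "W Q k (Suc m) = W Q k m @ W Q k m @
   (sgw Q k ^^ m) (replicate (2*k) 1 @ replicate (Q-k) 0) @ (sgw Q k ^^ m) (restA Q k)"
  unfolding W_Suc wA_def prefA_def
  by (simp add: sgw_pow_append W_def flip: sgw_pow_append)

lemma W_Suc3: "W Q k (Suc m) = (sgw Q k ^^ m) (prefA Q k) @ (sgw Q k ^^ m) (restA Q k)"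
  unfolding W_Suc wA_def by (simp add: sgw_pow_append)

lemma lenp_W: "k \<le> Q \<Longrightarrow> lenp (W Q k m) = 2 * NN Q ^ m"
  unfolding W_def by (simp add: lenp_sgw_pow tlen_def)

lemma lenp_prefA: "k \<le> Q \<Longrightarrow> lenp (prefA Q k) = 2*Q+4"
  by (simp add: prefA_def tlen_def)
lemma phi_prefA: "k \<le> Q \<Longrightarrow> phi Q (prefA Q k) = - (int Q - int k) * (int Q + 2)"
  by (simp add: prefA_def algebra_simps of_nat_diff)

lemma count_pref: "k \<le> Q \<Longrightarrow>
  int (length ((sgw Q k ^^ m) (prefA Q k))) = 2*(int Q+1) * int (NN Q)^m - (int Q - int k) * (int Q + 1)^m"
proof -
  assume k: "k \<le> Q"
  have "(int Q + 2) * int (length ((sgw Q k ^^ m) (prefA Q k))) =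
     (int Q + 1) * int (lenp ((sgw Q k ^^ m) (prefA Q k))) + phi Q ((sgw Q k ^^ m) (prefA Q k))"
    by (rule len_rel)
  also have "\<dots> = (int Q + 2) * (2*(int Q+1) * int (NN Q)^m - (int Q - int k) * (int Q + 1)^m)"
    using k by (simp add: lenp_sgw_pow phi_sgw_pow lenp_prefA phi_prefA algebra_simps)
  finally show ?thesis by simp
qed



lemma take_concat_split:
  "\<exists>j u. take n (concat (map f w)) = concat (map f (take j w)) @ u \<and>
     (u = [] \<or> (\<exists>a\<in>set w. \<exists>r. u = take r (f a)))"
proof (induction w arbitrary: n)
  case Nil
  then show ?case by auto
next
  case (Cons a w)
  show ?case
  proof (cases "n \<le> length (f a)")
    case True
    then show ?thesis by (intro exI[of _ 0] exI[of _ "take n (f a)"]) auto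
  next
    case False
    obtain j u where ju: "take (n - length (f a)) (concat (map f w)) = concat (map f (take j w)) @ u"
      "u = [] \<or> (\<exists>a\<in>set w. \<exists>r. u = take r (f a))" using Cons.IH by blast
    show ?thesis using False ju
      by (intro exI[of _ "Suc j"] exI[of _ u]) auto
  qed
qed

lemma phi_abs_le: "Q \<ge> 1 \<Longrightarrow> \<bar>phi Q v\<bar> \<le> int Q * int (length v)"
proof (induction v)
  case (Cons a v)
  have c: "\<bar>(if a = 0 then - int Q else 1)\<bar> \<le> int Q" using Cons.prems by auto
  have "\<bar>phi Q (a # v)\<bar> \<le> \<bar>(if a = 0 then - int Q else 1)\<bar> + \<bar>phi Q v\<bar>"
    by (simp only: phi_simps abs_triangle_ineq)
  then show ?case using c Cons by (simp add: algebra_simps)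
qed simp

lemma length_sg: "k \<le> Q \<Longrightarrow> length (sg Q k a) \<le> 3*Q+3"
  by (auto simp: sg_def wA_def wB_def prefA_def restA_def)

definition Phi0 :: "nat \<Rightarrow> int" where "Phi0 Q = int Q * (3 * int Q + 3)"

lemma phi_take_sg: "Q \<ge> 1 \<Longrightarrow> k \<le> Q \<Longrightarrow> \<bar>phi Q (take r (sg Q k a))\<bar> \<le> Phi0 Q"
proof -
  assume Q: "Q \<ge> 1" "k \<le> Q"
  have "\<bar>phi Q (take r (sg Q k a))\<bar> \<le> int Q * int (length (take r (sg Q k a)))"
    using phi_abs_le Q by blast
  also have "\<dots> \<le> int Q * (3 * int Q + 3)"
    using length_sg[OF Q(2), of a] by (intro mult_left_mono) auto
  finally show ?thesis by (simp add: Phi0_def)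
qed

lemma phi_prefix_W:
  assumes Q: "Q \<ge> 1" "k \<le> Q"
  shows "\<bar>phi Q (take n (W Q k m))\<bar> \<le> Phi0 Q * (2 * (int Q + 1)^m - 1)"
proof (induction m arbitrary: n)
  case 0
  have "\<bar>phi Q (take n [0])\<bar> \<le> Phi0 Q"
    using Q by (cases n) (auto simp: Phi0_def)
  then show ?case by (simp add: W_def)
next
  case (Suc m)
  have eq: "W Q k (Suc m) = sgw Q k (W Q k m)" by (simp add: W_def)
  obtain j u where ju: "take n (W Q k (Suc m)) = sgw Q k (take j (W Q k m)) @ u"
     "u = [] \<or> (\<exists>a\<in>set (W Q k m). \<exists>r. u = take r (sg Q k a))"
    using take_concat_split[of n "sg Q k" "W Q k m"] unfolding eq sgw_def by blast
  have u: "\<bar>phi Q u\<bar> \<le> Phi0 Q" using ju(2) phi_take_sg[OF Q] Q by (auto simp: Phi0_def)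
  have eqphi: "phi Q (take n (W Q k (Suc m))) = (int Q + 1) * phi Q (take j (W Q k m)) + phi Q u"
    using ju(1) phi_sgw[OF Q(2)] by simp
  have "\<bar>phi Q (take n (W Q k (Suc m)))\<bar> \<le> (int Q + 1) * \<bar>phi Q (take j (W Q k m))\<bar> + \<bar>phi Q u\<bar>"
  proof -
    have "\<bar>(int Q + 1) * phi Q (take j (W Q k m)) + phi Q u\<bar> \<le> \<bar>(int Q + 1) * phi Q (take j (W Q k m))\<bar> + \<bar>phi Q u\<bar>"
      by (rule abs_triangle_ineq)
    also have "\<bar>(int Q + 1) * phi Q (take j (W Q k m))\<bar> = (int Q + 1) * \<bar>phi Q (take j (W Q k m))\<bar>"
      by (simp add: abs_mult)
    finally show ?thesis by (simp only: eqphi)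
  qed
  also have "\<dots> \<le> (int Q + 1) * (Phi0 Q * (2 * (int Q + 1)^m - 1)) + Phi0 Q"
    using Suc.IH[of j] u by (intro add_mono mult_left_mono) auto
  also have "\<dots> \<le> Phi0 Q * (2 * (int Q + 1)^Suc m - 1)"
  proof -
    have "Phi0 Q \<ge> 0" by (simp add: Phi0_def)
    moreover have "(int Q + 1) * (2 * (int Q + 1)^m - 1) + 1 \<le> 2 * (int Q + 1)^Suc m - 1"
      using Q by (simp add: algebra_simps)
    ultimately have "Phi0 Q * ((int Q + 1) * (2 * (int Q + 1)^m - 1) + 1) \<le> Phi0 Q * (2 * (int Q + 1)^Suc m - 1)"
      by (rule mult_left_mono[rotated])
    then show ?thesis by (simp add: algebra_simps)
  qed
  finally show ?case .
qed



definition tiles1 :: "nat list \<Rightarrow> int \<Rightarrow> (nat \<times> int) set" where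
  "tiles1 w d = {(w!i, d + int (lenp (take i w))) | i. i < length w}"

lemma tiles1_Nil[simp]: "tiles1 [] d = {}" by (simp add: tiles1_def)

lemma tiles1_Cons: "tiles1 (a # w) d = insert (a, d) (tiles1 w (d + int (tlen a)))"
proof (rule set_eqI)
  fix p
  show "p \<in> tiles1 (a # w) d \<longleftrightarrow> p \<in> insert (a, d) (tiles1 w (d + int (tlen a)))"
  proof
    assume "p \<in> tiles1 (a # w) d"
    then obtain i where i: "i < Suc (length w)" "p = ((a#w)!i, d + int (lenp (take i (a#w))))"
      by (auto simp: tiles1_def)
    show "p \<in> insert (a, d) (tiles1 w (d + int (tlen a)))"
    proof (cases i)
      case 0
      then show ?thesis using i by simp
    next
      case (Suc j)
      then have "p = (w!j, d + int (tlen a) + int (lenp (take j w)))" "j < length w" using i by auto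
      then show ?thesis unfolding tiles1_def by blast
    qed
  next
    assume "p \<in> insert (a, d) (tiles1 w (d + int (tlen a)))"
    then show "p \<in> tiles1 (a # w) d"
    proof
      assume "p = (a, d)"
      then show ?thesis unfolding tiles1_def by (intro CollectI exI[of _ 0]) auto
    next
      assume "p \<in> tiles1 w (d + int (tlen a))"
      then obtain j where j: "j < length w" "p = (w!j, d + int (tlen a) + int (lenp (take j w)))"
        by (auto simp: tiles1_def)
      then show ?thesis unfolding tiles1_def by (intro CollectI exI[of _ "Suc j"]) auto
    qed
  qed
qed

lemma tiles1_append: "tiles1 (u @ v) d = tiles1 u d \<union> tiles1 v (d + int (lenp u))"
  by (induction u arbitrary: d) (auto simp: tiles1_Cons algebra_simps)

lemma tiles1_bounds: "(a, x) \<in> tiles1 w d \<Longrightarrow> d \<le> x \<and> x + int (tlen a) \<le> d + int (lenp w)"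
proof (induction w arbitrary: d)
  case (Cons b w)
  then show ?case using tlen_ge1[of b] by (fastforce simp: tiles1_Cons)
qed simp

lemma tiles1_letter: "(a, x) \<in> tiles1 w d \<Longrightarrow> a \<in> set w"
  by (auto simp: tiles1_def)

lemma tiles1_finite[simp]: "finite (tiles1 w d)"
  by (induction w arbitrary: d) (auto simp: tiles1_Cons)

lemma tiles1_card: "card (tiles1 w d) = length w"
proof (induction w arbitrary: d)
  case (Cons a w)
  have "(a, d) \<notin> tiles1 w (d + int (tlen a))"
    using tiles1_bounds[of a d w "d + int (tlen a)"] tlen_ge1[of a] by auto
  then show ?case using Cons by (simp add: tiles1_Cons)
qed simp

lemma tiles1_sep:
  "p \<in> tiles1 w d \<Longrightarrow> p' \<in> tiles1 w d \<Longrightarrow> p \<noteq> p' \<Longrightarrow>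
   snd p + int (tlen (fst p)) \<le> snd p' \<or> snd p' + int (tlen (fst p')) \<le> snd p"
proof (induction w arbitrary: d)
  case (Cons a w)
  show ?case
  proof (cases "p = (a, d)")
    case True
    then have "p' \<in> tiles1 w (d + int (tlen a))" using Cons.prems by (auto simp: tiles1_Cons)
    then show ?thesis using True tiles1_bounds[of "fst p'" "snd p'"] by auto
  next
    case False
    then have p: "p \<in> tiles1 w (d + int (tlen a))" using Cons.prems by (auto simp: tiles1_Cons)
    show ?thesis
    proof (cases "p' = (a, d)")
      case True
      then show ?thesis using p tiles1_bounds[of "fst p" "snd p"] by auto
    next
      case False
      then have "p' \<in> tiles1 w (d + int (tlen a))" using Cons.prems by (auto simp: tiles1_Cons)
      then show ?thesis using Cons.IH p Cons.prems(3) by blast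
    qed
  qed
qed simp

lemma tiles1_count: "card {x. (i, x) \<in> tiles1 w d} = count_list w i"
proof (induction w arbitrary: d)
  case Nil
  then show ?case by simp
next
  case (Cons a w)
  have nin: "(a, d) \<notin> tiles1 w (d + int (tlen a))"
    using tiles1_bounds[of a d w "d + int (tlen a)"] tlen_ge1[of a] by auto
  have fin: "finite {x. (i, x) \<in> tiles1 w (d + int (tlen a))}"
    by (rule finite_subset[of _ "snd ` tiles1 w (d + int (tlen a))"]) force+
  show ?case
  proof (cases "i = a")
    case True
    have "{x. (i, x) \<in> tiles1 (a # w) d} = insert d {x. (i, x) \<in> tiles1 w (d + int (tlen a))}"
      using True by (auto simp: tiles1_Cons)
    then show ?thesis using True nin fin Cons.IH by simp
  next
    case False
    have "{x. (i, x) \<in> tiles1 (a # w) d} = {x. (i, x) \<in> tiles1 w (d + int (tlen a))}"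
      using False by (auto simp: tiles1_Cons)
    then show ?thesis using False Cons.IH by simp
  qed
qed

lemma tiles1_cover:
  "w \<noteq> [] \<Longrightarrow> real_of_int d \<le> u \<Longrightarrow> u \<le> real_of_int d + real (lenp w) \<Longrightarrow>
   \<exists>(a, x)\<in>tiles1 w d. real_of_int x \<le> u \<and> u \<le> real_of_int x + real (tlen a)"
proof (induction w arbitrary: d)
  case (Cons a w)
  show ?case
  proof (cases "u \<le> real_of_int d + real (tlen a)")
    case True
    then show ?thesis using Cons.prems by (auto simp: tiles1_Cons)
  next
    case False
    then have "w \<noteq> []" using Cons.prems by auto
    then show ?thesis using Cons.IH[of "d + int (tlen a)"] Cons.prems False
      by (auto simp: tiles1_Cons)
  qed
qed simp

lemma tiles1_subst:
  assumes "k \<le> Q"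
  shows "(\<Union>(a, x)\<in>tiles1 w d. tiles1 (sg Q k a) (int (NN Q) * x)) = tiles1 (sgw Q k w) (int (NN Q) * d)"
proof (induction w arbitrary: d)
  case (Cons a w)
  show ?case
    using Cons.IH[of "d + int (tlen a)"]
    by (simp add: tiles1_Cons tiles1_append lenp_sg[OF assms] algebra_simps)
qed simp

definition wo :: "nat \<Rightarrow> nat \<Rightarrow> int" where "wo Q m = - 2 * (\<Sum>j<m. int (NN Q) ^ j)"

definition S1 :: "nat \<Rightarrow> nat \<Rightarrow> (nat \<times> int) set" where
  "S1 Q k = (\<Union>m. tiles1 (W Q k m) (wo Q m))"

lemma wo_Suc: "wo Q (Suc m) = wo Q m - 2 * int (NN Q) ^ m"
  by (simp add: wo_def algebra_simps)

lemma sum_pow_bound: "2 * (\<Sum>j<m. int (NN Q) ^ j) \<le> int (NN Q) ^ m - 1"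
proof (induction m)
  case (Suc m)
  have "int (NN Q) ^ Suc m = int (NN Q) * int (NN Q)^m" by simp
  moreover have "int (NN Q) \<ge> 3" by (simp add: NN_def)
  moreover have "int (NN Q)^m \<ge> 0" by simp
  ultimately have "3 * int (NN Q)^m \<le> int (NN Q) ^ Suc m"
    by (metis mult_right_mono)
  then show ?case using Suc by simp
qed simp

lemma wo_nonpos: "wo Q m \<le> 0" by (simp add: wo_def sum_nonneg)

lemma wo_bounds: "- wo Q m \<le> int (NN Q) ^ m - 1" "wo Q m + 2 * int (NN Q)^m \<ge> int (NN Q)^m + 1"
proof -
  show "- wo Q m \<le> int (NN Q) ^ m - 1" using sum_pow_bound[of Q m] by (simp add: wo_def)
  then show "wo Q m + 2 * int (NN Q)^m \<ge> int (NN Q)^m + 1" by linarith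
qed

lemma window_Suc: "wo Q (Suc m) \<le> - 2 * int (NN Q) ^ m"
   "wo Q (Suc m) + 2 * int (NN Q) ^ Suc m \<ge> 2 * int (NN Q) ^ m"
proof -
  show "wo Q (Suc m) \<le> - 2 * int (NN Q) ^ m" using wo_nonpos[of Q m] by (simp add: wo_Suc)
  have "int (NN Q) ^ Suc m \<ge> 3 * int (NN Q)^m" by (simp add: NN_def)
  then show "wo Q (Suc m) + 2 * int (NN Q) ^ Suc m \<ge> 2 * int (NN Q) ^ m"
    using wo_bounds(2)[of Q "Suc m"] zero_le_power[of "int (NN Q)" m] by linarith
qed

lemma nest:
  assumes "k \<le> Q"
  shows "tiles1 (W Q k m) (wo Q m) \<subseteq> tiles1 (W Q k (Suc m)) (wo Q (Suc m))"
proof -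
  have "wo Q (Suc m) + int (lenp (W Q k m)) = wo Q m"
    using lenp_W[OF assms] by (simp add: wo_Suc)
  then show ?thesis
    unfolding W_Suc2[of Q k m] tiles1_append by auto
qed

lemma nest_mono: assumes k: "k \<le> Q" and mM: "m \<le> M"
  shows "tiles1 (W Q k m) (wo Q m) \<subseteq> tiles1 (W Q k M) (wo Q M)"
  using mM
proof (induction M rule: dec_induct)
  case (step M)
  then show ?case using nest[OF k, of M] by blast
qed simp

lemma block:
  assumes "k \<le> Q" "m \<le> M"
  shows "\<exists>U V. W Q k M = U @ W Q k m @ V \<and> wo Q M + int (lenp U) = wo Q m"
  using assms(2)
proof (induction M rule: dec_induct)
  case base
  then show ?case by (intro exI[of _ "[]"]) auto
next
  case (step M)
  then obtain U V where UV: "W Q k M = U @ W Q k m @ V" "wo Q M + int (lenp U) = wo Q m" by blast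
  have "wo Q (Suc M) + int (lenp (W Q k M)) = wo Q M"
    using lenp_W[OF assms(1)] by (simp add: wo_Suc)
  then show ?case using UV unfolding W_Suc2[of Q k M]
    by (intro exI[of _ "W Q k M @ U"] exI[of _ "V @ (sgw Q k ^^ M) (replicate (2*k) 1 @ replicate (Q-k) 0) @ (sgw Q k ^^ M) (restA Q k)"])
      auto
qed

lemma S1_in_window:
  assumes k: "k \<le> Q" and p: "(a, x) \<in> S1 Q k" and lo: "wo Q m \<le> x"
    and hi: "x + int (tlen a) \<le> wo Q m + 2 * int (NN Q) ^ m"
  shows "(a, x) \<in> tiles1 (W Q k m) (wo Q m)"
proof -
  obtain M0 where "(a, x) \<in> tiles1 (W Q k M0) (wo Q M0)" using p by (auto simp: S1_def)
  then have p': "(a, x) \<in> tiles1 (W Q k (max M0 m)) (wo Q (max M0 m))"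
    using nest_mono[OF k, of M0 "max M0 m"] by auto
  obtain U V where UV: "W Q k (max M0 m) = U @ W Q k m @ V" "wo Q (max M0 m) + int (lenp U) = wo Q m"
    using block[OF k, of m "max M0 m"] by auto
  have l: "lenp (W Q k m) = 2 * NN Q ^ m" using lenp_W[OF k] .
  show ?thesis
    using p' unfolding UV(1) tiles1_append
  proof (elim UnE)
    assume "(a, x) \<in> tiles1 U (wo Q (max M0 m))"
    then have False using tiles1_bounds[of a x U "wo Q (max M0 m)"] UV(2) lo tlen_ge1[of a] by linarith
    then show ?thesis ..
  next
    assume "(a, x) \<in> tiles1 V (wo Q (max M0 m) + int (lenp U) + int (lenp (W Q k m)))"
    moreover have "int (lenp (W Q k m)) = 2 * int (NN Q)^m" using l by simp
    ultimately have False using tiles1_bounds[of a x V "wo Q (max M0 m) + int (lenp U) + int (lenp (W Q k m))"] UV(2) hi tlen_ge1[of a]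
      by linarith
    then show ?thesis ..
  qed (use UV(2) in auto)
qed

lemma S1_sep:
  assumes k: "k \<le> Q" and p: "p \<in> S1 Q k" and p': "p' \<in> S1 Q k" and ne: "p \<noteq> p'"
  shows "snd p + int (tlen (fst p)) \<le> snd p' \<or> snd p' + int (tlen (fst p')) \<le> snd p"
proof -
  obtain m where m: "p \<in> tiles1 (W Q k m) (wo Q m)" using p by (auto simp: S1_def)
  obtain m' where m': "p' \<in> tiles1 (W Q k m') (wo Q m')" using p' by (auto simp: S1_def)
  have "p \<in> tiles1 (W Q k (max m m')) (wo Q (max m m'))" "p' \<in> tiles1 (W Q k (max m m')) (wo Q (max m m'))"
    using nest_mono[OF k, of m "max m m'"] nest_mono[OF k, of m' "max m m'"] m m' by auto
  then show ?thesis using tiles1_sep ne by blast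
qed

lemma S1_letters: "(a, x) \<in> S1 Q k \<Longrightarrow> a < 2"
proof -
  assume "(a, x) \<in> S1 Q k"
  then obtain m where "(a, x) \<in> tiles1 (W Q k m) (wo Q m)" by (auto simp: S1_def)
  then have "a \<in> set (W Q k m)" by (rule tiles1_letter)
  then have "a \<in> {0,1}" using letters_W[of Q k m] by blast
  then show "a < 2" by auto
qed

lemma S1_cover:
  assumes k: "k \<le> Q"
  shows "\<exists>(a, x)\<in>S1 Q k. real_of_int x \<le> u \<and> u \<le> real_of_int x + real (tlen a)"
proof -
  obtain m where m: "\<bar>u\<bar> \<le> real m" using real_arch_simple by blast
  have "real m \<le> real (NN Q ^ m)"
  proof -
    have "m < 2 ^ m" by (rule less_exp)
    also have "2 ^ m \<le> NN Q ^ m" by (rule power_mono) (auto simp: NN_def)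
    finally show ?thesis by simp
  qed
  then have "real m \<le> real (NN Q) ^ m" by (metis of_nat_power)
  then have u: "\<bar>u\<bar> \<le> real (NN Q) ^ m" using m by linarith
  have ne: "W Q k (Suc m) \<noteq> []" using lenp_W[OF k, of "Suc m"] by (auto simp: NN_def)
  have "real_of_int (wo Q (Suc m)) \<le> u" "u \<le> real_of_int (wo Q (Suc m)) + real (lenp (W Q k (Suc m)))"
  proof -
    have a: "real_of_int (wo Q (Suc m)) \<le> - 2 * real (NN Q) ^ m"
    proof -
      have "real_of_int (wo Q (Suc m)) \<le> real_of_int (- 2 * int (NN Q) ^ m)"
        using window_Suc(1)[of Q m] by (simp only: of_int_le_iff)
      then show ?thesis by simp
    qed
    have b: "real_of_int (wo Q (Suc m)) + 2 * real (NN Q) ^ Suc m \<ge> 2 * real (NN Q) ^ m"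
    proof -
      have "real_of_int (wo Q (Suc m) + 2 * int (NN Q) ^ Suc m) \<ge> real_of_int (2 * int (NN Q) ^ m)"
        using window_Suc(2)[of Q m] by (simp only: of_int_le_iff)
      then show ?thesis by simp
    qed
    have pos: "real (NN Q) ^ m \<ge> 0" by simp
    show "real_of_int (wo Q (Suc m)) \<le> u" using a u pos by linarith
    show "u \<le> real_of_int (wo Q (Suc m)) + real (lenp (W Q k (Suc m)))"
      using b u pos lenp_W[OF k, of "Suc m"] by simp
  qed
  then obtain a x where "(a, x) \<in> tiles1 (W Q k (Suc m)) (wo Q (Suc m))"
     "real_of_int x \<le> u \<and> u \<le> real_of_int x + real (tlen a)"
    using tiles1_cover[OF ne] by blast
  then show ?thesis by (auto simp: S1_def)
qed



definition in1 :: "(nat \<times> int) set \<Rightarrow> real \<Rightarrow> real \<Rightarrow> (nat \<times> int) set" where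
  "in1 S a b = {p\<in>S. a \<le> real_of_int (snd p) \<and> real_of_int (snd p) + real (tlen (fst p)) \<le> b}"
definition meet1 :: "(nat \<times> int) set \<Rightarrow> real \<Rightarrow> real \<Rightarrow> (nat \<times> int) set" where
  "meet1 S a b = {p\<in>S. real_of_int (snd p) \<le> b \<and> a \<le> real_of_int (snd p) + real (tlen (fst p))}"

lemma meet1_sub: "meet1 S a b \<subseteq> in1 S (a - 2) (b + 2)"
proof
  fix p assume p: "p \<in> meet1 S a b"
  have "real (tlen (fst p)) \<le> 2" by (simp add: tlen_def)
  then show "p \<in> in1 S (a - 2) (b + 2)" using p unfolding meet1_def in1_def by auto
qed

lemma window_for:
  assumes "R \<le> 2 * real (NN Q) ^ m"
  shows "real_of_int (wo Q (Suc m)) \<le> - R" "R \<le> real_of_int (wo Q (Suc m)) + 2 * real (NN Q) ^ Suc m"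
proof -
  have "real_of_int (wo Q (Suc m)) \<le> real_of_int (- 2 * int (NN Q) ^ m)"
    using window_Suc(1)[of Q m] by (simp only: of_int_le_iff)
  then show "real_of_int (wo Q (Suc m)) \<le> - R" using assms by simp
  have "real_of_int (wo Q (Suc m) + 2 * int (NN Q) ^ Suc m) \<ge> real_of_int (2 * int (NN Q) ^ m)"
    using window_Suc(2)[of Q m] by (simp only: of_int_le_iff)
  then show "R \<le> real_of_int (wo Q (Suc m)) + 2 * real (NN Q) ^ Suc m" using assms by simp
qed

lemma exists_pow_ge: "\<exists>m. R \<le> 2 * real (NN Q) ^ m"
proof -
  obtain m where m: "R \<le> real m" using real_arch_simple by blast
  have "m < 2 ^ m" by (rule less_exp)
  also have "2 ^ m \<le> NN Q ^ m" by (rule power_mono) (auto simp: NN_def)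
  finally have "real m \<le> real (NN Q) ^ m" by (metis less_imp_le of_nat_le_iff of_nat_power)
  then show ?thesis using m by (intro exI[of _ m]) linarith
qed

lemma in1_window:
  assumes k: "k \<le> Q" and lo: "real_of_int (wo Q m) \<le> a" and hi: "b \<le> real_of_int (wo Q m) + 2 * real (NN Q)^m"
  shows "in1 (S1 Q k) a b = in1 (tiles1 (W Q k m) (wo Q m)) a b"
proof
  show "in1 (S1 Q k) a b \<subseteq> in1 (tiles1 (W Q k m) (wo Q m)) a b"
  proof
    fix p assume p: "p \<in> in1 (S1 Q k) a b"
    obtain c x where cx: "p = (c, x)" by force
    have "wo Q m \<le> x" using p lo unfolding cx in1_def by simp
    moreover have "real_of_int (x + int (tlen c)) \<le> real_of_int (wo Q m + 2 * int (NN Q) ^ m)"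
      using p hi unfolding cx in1_def by simp
    then have "x + int (tlen c) \<le> wo Q m + 2 * int (NN Q) ^ m" by (simp only: of_int_le_iff)
    ultimately have "(c, x) \<in> tiles1 (W Q k m) (wo Q m)"
      using S1_in_window[OF k, of c x m] p unfolding cx in1_def by simp
    then show "p \<in> in1 (tiles1 (W Q k m) (wo Q m)) a b" using p unfolding cx in1_def by simp
  qed
  show "in1 (tiles1 (W Q k m) (wo Q m)) a b \<subseteq> in1 (S1 Q k) a b"
    unfolding in1_def S1_def by blast
qed

lemma exists_window: "\<exists>m. real_of_int (wo Q m) \<le> a \<and> b \<le> real_of_int (wo Q m) + 2 * real (NN Q)^m"
proof -
  obtain m where m: "max \<bar>a\<bar> \<bar>b\<bar> \<le> 2 * real (NN Q) ^ m" using exists_pow_ge by blast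
  show ?thesis using window_for[OF m] by (intro exI[of _ "Suc m"]) auto
qed

lemma in1_finite: "k \<le> Q \<Longrightarrow> finite (in1 (S1 Q k) a b)"
proof -
  assume k: "k \<le> Q"
  obtain m where "real_of_int (wo Q m) \<le> a \<and> b \<le> real_of_int (wo Q m) + 2 * real (NN Q)^m"
    using exists_window by blast
  then show ?thesis using in1_window[OF k, of m a b]
    by (metis (no_types, lifting) finite_subset in1_def mem_Collect_eq subsetI tiles1_finite)
qed

lemma meet1_finite: "k \<le> Q \<Longrightarrow> finite (meet1 (S1 Q k) a b)"
  using in1_finite meet1_sub finite_subset by metis

lemma card_meet1_le: "k \<le> Q \<Longrightarrow> card (meet1 (S1 Q k) a b) \<le> card (in1 (S1 Q k) (a-2) (b+2))"
  by (rule card_mono[OF in1_finite meet1_sub])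

lemma in1_split:
  assumes k: "k \<le> Q"
  shows "card (in1 (S1 Q k) a b) \<le> card (in1 (S1 Q k) a s) + card (in1 (S1 Q k) s b) + 1"
proof -
  define St where "St = {p\<in>in1 (S1 Q k) a b. real_of_int (snd p) < s \<and> s < real_of_int (snd p) + real (tlen (fst p))}"
  have sub: "in1 (S1 Q k) a b \<subseteq> in1 (S1 Q k) a s \<union> in1 (S1 Q k) s b \<union> St"
    unfolding St_def in1_def by auto
  have finSt: "finite St" unfolding St_def using in1_finite[OF k] by auto
  have "card St \<le> Suc 0"
  proof (rule card_le_Suc0_iff_eq[OF finSt, THEN iffD2])
    show "\<forall>x\<in>St. \<forall>y\<in>St. x = y"
    proof (intro ballI, rule ccontr)
      fix p p' assume "p \<in> St" "p' \<in> St" "p \<noteq> p'"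
      then have pp: "p \<in> S1 Q k" "p' \<in> S1 Q k" "real_of_int (snd p) < s" "s < real_of_int (snd p) + real (tlen (fst p))"
        "real_of_int (snd p') < s" "s < real_of_int (snd p') + real (tlen (fst p'))"
        unfolding St_def in1_def by auto
      from S1_sep[OF k pp(1,2) \<open>p \<noteq> p'\<close>]
      show False
      proof
        assume "snd p + int (tlen (fst p)) \<le> snd p'"
        then have "real_of_int (snd p + int (tlen (fst p))) \<le> real_of_int (snd p')" by (simp only: of_int_le_iff)
        then show False using pp by simp
      next
        assume "snd p' + int (tlen (fst p')) \<le> snd p"
        then have "real_of_int (snd p' + int (tlen (fst p'))) \<le> real_of_int (snd p)" by (simp only: of_int_le_iff)
        then show False using pp by simp
      qed
    qed
  qed
  have "card (in1 (S1 Q k) a b) \<le> card (in1 (S1 Q k) a s \<union> in1 (S1 Q k) s b \<union> St)"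
    using sub in1_finite[OF k] St_def by (intro card_mono) auto
  also have "\<dots> \<le> card (in1 (S1 Q k) a s) + card (in1 (S1 Q k) s b) + card St"
    by (meson card_Un_le add_le_mono le_refl order_trans)
  finally show ?thesis using \<open>card St \<le> Suc 0\<close> by linarith
qed

lemma in1_crude:
  assumes k: "k \<le> Q" and ab: "a \<le> b"
  shows "real (card (in1 (S1 Q k) a b)) \<le> b - a"
proof -
  have inj: "inj_on snd (in1 (S1 Q k) a b)"
  proof (rule inj_onI)
    fix p p' assume "p \<in> in1 (S1 Q k) a b" "p' \<in> in1 (S1 Q k) a b" "snd p = snd p'"
    then have pp: "p \<in> S1 Q k" "p' \<in> S1 Q k" "snd p = snd p'" unfolding in1_def by auto
    show "p = p'"
    proof (rule ccontr)
      assume "p \<noteq> p'"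
      from S1_sep[OF k pp(1,2) this]
      have "snd p + int (tlen (fst p)) \<le> snd p' \<or> snd p' + int (tlen (fst p')) \<le> snd p" .
      moreover have "int (tlen (fst p)) \<ge> 1" "int (tlen (fst p')) \<ge> 1" using tlen_ge1 by auto
      ultimately show False using pp(3) by linarith
    qed
  qed
  have img: "snd ` in1 (S1 Q k) a b \<subseteq> {\<lceil>a\<rceil> .. \<lfloor>b\<rfloor> - 1}"
  proof
    fix x assume "x \<in> snd ` in1 (S1 Q k) a b"
    then obtain c where c: "(c, x) \<in> in1 (S1 Q k) a b" by force
    then have "a \<le> real_of_int x" "real_of_int x + 1 \<le> b"
      using tlen_ge1[of c] unfolding in1_def by auto
    moreover have "x + 1 \<le> \<lfloor>b\<rfloor>" using calculation(2) by (simp add: le_floor_iff)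
    ultimately show "x \<in> {\<lceil>a\<rceil> .. \<lfloor>b\<rfloor> - 1}"
      by (auto simp: ceiling_le_iff)
  qed
  have "card (in1 (S1 Q k) a b) = card (snd ` in1 (S1 Q k) a b)" using inj by (simp add: card_image)
  also have "\<dots> \<le> card {\<lceil>a\<rceil> .. \<lfloor>b\<rfloor> - 1}" by (rule card_mono[OF _ img]) simp
  finally have "real (card (in1 (S1 Q k) a b)) \<le> real (nat (\<lfloor>b\<rfloor> - 1 - \<lceil>a\<rceil> + 1))" by simp
  also have "\<dots> \<le> b - a"
  proof -
    have f: "real_of_int \<lfloor>b\<rfloor> \<le> b" "a \<le> real_of_int \<lceil>a\<rceil>" by auto
    show ?thesis
    proof (cases "\<lfloor>b\<rfloor> - 1 - \<lceil>a\<rceil> + 1 \<ge> 0")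
      case True
      then have "real (nat (\<lfloor>b\<rfloor> - 1 - \<lceil>a\<rceil> + 1)) = real_of_int (\<lfloor>b\<rfloor> - 1 - \<lceil>a\<rceil> + 1)"
        by simp
      then show ?thesis using f by linarith
    next
      case False
      then show ?thesis using ab by simp
    qed
  qed
  finally show ?thesis .
qed

lemma exact_count:
  assumes k: "k \<le> Q"
  shows "in1 (S1 Q k) (real_of_int (wo Q (Suc M))) (real_of_int (wo Q (Suc M)) + real (2*Q+4) * real (NN Q)^M)
        = tiles1 ((sgw Q k ^^ M) (prefA Q k)) (wo Q (Suc M))"
proof -
  let ?d = "wo Q (Suc M)"
  have lp: "lenp ((sgw Q k ^^ M) (prefA Q k)) = NN Q ^ M * (2*Q+4)"
    using lenp_sgw_pow[OF k] lenp_prefA[OF k] by simp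
  have inW: "tiles1 ((sgw Q k ^^ M) (prefA Q k)) ?d \<subseteq> tiles1 (W Q k (Suc M)) ?d"
    unfolding W_Suc3 tiles1_append by auto
  show ?thesis
  proof
    show "tiles1 ((sgw Q k ^^ M) (prefA Q k)) ?d \<subseteq> in1 (S1 Q k) ?d (?d + real (2*Q+4) * real (NN Q)^M)"
    proof
      fix p assume p: "p \<in> tiles1 ((sgw Q k ^^ M) (prefA Q k)) ?d"
      obtain c x where cx: "p = (c, x)" by force
      have b: "?d \<le> x" "x + int (tlen c) \<le> ?d + int (lenp ((sgw Q k ^^ M) (prefA Q k)))"
        using tiles1_bounds[of c x "(sgw Q k ^^ M) (prefA Q k)" ?d] p unfolding cx by auto
      have "real_of_int (x + int (tlen c)) \<le> real_of_int (?d + int (lenp ((sgw Q k ^^ M) (prefA Q k))))"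
        using b(2) by (simp only: of_int_le_iff)
      then have "real_of_int x + real (tlen c) \<le> real_of_int ?d + real (2*Q+4) * real (NN Q)^M"
        by (simp add: lp algebra_simps)
      moreover have "p \<in> S1 Q k" using p inW unfolding S1_def by blast
      ultimately show "p \<in> in1 (S1 Q k) ?d (?d + real (2*Q+4) * real (NN Q)^M)"
        using b(1) unfolding in1_def cx by simp
    qed
    show "in1 (S1 Q k) ?d (?d + real (2*Q+4) * real (NN Q)^M) \<subseteq> tiles1 ((sgw Q k ^^ M) (prefA Q k)) ?d"
    proof
      fix p assume p: "p \<in> in1 (S1 Q k) ?d (?d + real (2*Q+4) * real (NN Q)^M)"
      have le: "real (2*Q+4) * real (NN Q)^M \<le> 2 * real (NN Q) ^ Suc M"
      proof -
        have "real (2*Q+4) \<le> 2 * real (NN Q)" by (simp add: NN_def)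
        then show ?thesis by (simp add: mult_right_mono)
      qed
      have "p \<in> in1 (tiles1 (W Q k (Suc M)) ?d) ?d (?d + real (2*Q+4) * real (NN Q)^M)"
        using in1_window[OF k, of "Suc M" "real_of_int ?d" "real_of_int ?d + real (2*Q+4) * real (NN Q)^M"] p le
        by simp
      then have p2: "p \<in> tiles1 (W Q k (Suc M)) ?d" and
        pb: "real_of_int (snd p) + real (tlen (fst p)) \<le> ?d + real (2*Q+4) * real (NN Q)^M"
        unfolding in1_def by auto
      show "p \<in> tiles1 ((sgw Q k ^^ M) (prefA Q k)) ?d"
        using p2 unfolding W_Suc3 tiles1_append
      proof (elim UnE)
        assume "p \<in> tiles1 ((sgw Q k ^^ M) (restA Q k)) (?d + int (lenp ((sgw Q k ^^ M) (prefA Q k))))"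
        then have "?d + int (lenp ((sgw Q k ^^ M) (prefA Q k))) \<le> snd p"
          using tiles1_bounds[of "fst p" "snd p"] by auto
        then have "real_of_int (?d + int (NN Q ^ M * (2*Q+4))) \<le> real_of_int (snd p)"
          unfolding lp by (simp only: of_int_le_iff)
        then have False using pb tlen_ge1[of "fst p"] by (simp add: algebra_simps)
        then show ?thesis ..
      qed
    qed
  qed
qed

lemma exact_card:
  assumes k: "k \<le> Q"
  shows "int (card (in1 (S1 Q k) (real_of_int (wo Q (Suc M))) (real_of_int (wo Q (Suc M)) + real (2*Q+4) * real (NN Q)^M)))
        = 2*(int Q+1) * int (NN Q)^M - (int Q - int k) * (int Q + 1)^M"
  unfolding exact_count[OF k] tiles1_card using count_pref[OF k] .



lemma lenp_ge_length: "lenp v \<ge> length v"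
  by (induction v) (auto simp: tlen_def)

lemma lenp_take_mono: "i \<le> j \<Longrightarrow> lenp (take i w) \<le> lenp (take j w)"
proof -
  assume "i \<le> j"
  then have "take j w = take i w @ take (j - i) (drop i w)"
    by (metis le_add_diff_inverse take_add)
  then show ?thesis by (metis le_add1 lenp_simps(3))
qed

lemma lenp_take_strict: "i < j \<Longrightarrow> j \<le> length w \<Longrightarrow> lenp (take i w) + 1 \<le> lenp (take j w)"
proof -
  assume ij: "i < j" "j \<le> length w"
  then have eq: "take j w = take i w @ take (j - i) (drop i w)"
    by (metis less_imp_le le_add_diff_inverse take_add)
  have "length (take (j - i) (drop i w)) \<ge> 1" using ij by simp
  then have "lenp (take (j - i) (drop i w)) \<ge> 1" using lenp_ge_length order_trans by blast
  then show ?thesis using eq by simp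
qed

lemma lenp_take_Suc: "i < length w \<Longrightarrow> lenp (take (Suc i) w) = lenp (take i w) + tlen (w!i)"
  by (simp add: take_Suc_conv_app_nth)

definition Eset :: "nat list \<Rightarrow> int \<Rightarrow> real \<Rightarrow> nat set" where
  "Eset w d t = {i. i < length w \<and> real_of_int d + real (lenp (take (Suc i) w)) \<le> t}"

lemma Eset_eq: "Eset w d t = {..<card (Eset w d t)}"
proof -
  let ?E = "Eset w d t"
  have fin: "finite ?E" unfolding Eset_def by auto
  have down: "j \<in> ?E" if "i \<in> ?E" "j \<le> i" for i j
  proof -
    have "lenp (take (Suc j) w) \<le> lenp (take (Suc i) w)" using that(2) by (intro lenp_take_mono) simp
    then show ?thesis using that unfolding Eset_def by auto
  qed
  show ?thesis
  proof (intro set_eqI iffI)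
    fix i assume i: "i \<in> ?E"
    have "{..i} \<subseteq> ?E" using down i by auto
    then have "card {..i} \<le> card ?E" using fin by (intro card_mono) auto
    then show "i \<in> {..<card ?E}" by simp
  next
    fix i assume i: "i \<in> {..<card ?E}"
    show "i \<in> ?E"
    proof (rule ccontr)
      assume "i \<notin> ?E"
      then have "?E \<subseteq> {..<i}" using down by (meson lessThan_iff not_le_imp_less subsetI)
      then have "card ?E \<le> i" by (metis card_lessThan card_mono finite_lessThan)
      then show False using i by simp
    qed
  qed
qed

lemma Eset_card_le: "card (Eset w d t) \<le> length w"
proof -
  have "Eset w d t \<subseteq> {..<length w}" unfolding Eset_def by auto
  then show ?thesis by (metis card_lessThan card_mono finite_lessThan)
qed

lemma Eset_props:
  assumes n: "n = card (Eset w d t)"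
  shows "n \<ge> 1 \<Longrightarrow> real_of_int d + real (lenp (take n w)) \<le> t"
    and "n < length w \<Longrightarrow> t < real_of_int d + real (lenp (take (Suc n) w))"
proof -
  assume "n \<ge> 1"
  then have "n - 1 \<in> Eset w d t" by (subst Eset_eq) (simp add: n[symmetric])
  then show "real_of_int d + real (lenp (take n w)) \<le> t" unfolding Eset_def using \<open>n \<ge> 1\<close> by auto
next
  assume "n < length w"
  have "n \<notin> Eset w d t" by (subst Eset_eq) (simp add: n[symmetric])
  then show "t < real_of_int d + real (lenp (take (Suc n) w))" unfolding Eset_def using \<open>n < length w\<close> by auto
qed

lemma Eset_rel: "(real Q + 2) * real (card (Eset w d t)) =
   (real Q + 1) * real (lenp (take (card (Eset w d t)) w)) + real_of_int (phi Q (take (card (Eset w d t)) w))"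
proof -
  let ?n = "card (Eset w d t)"
  have "(int Q + 2) * int (length (take ?n w)) = (int Q + 1) * int (lenp (take ?n w)) + phi Q (take ?n w)"
    by (rule len_rel)
  moreover have "length (take ?n w) = ?n" using Eset_card_le[of w d t] by simp
  ultimately have "(int Q + 2) * int ?n = (int Q + 1) * int (lenp (take ?n w)) + phi Q (take ?n w)" by simp
  then have "real_of_int ((int Q + 2) * int ?n) = real_of_int ((int Q + 1) * int (lenp (take ?n w)) + phi Q (take ?n w))"
    by simp
  then show ?thesis by simp
qed

lemma Eset_upper:
  assumes Phi: "\<And>n. \<bar>real_of_int (phi Q (take n w))\<bar> \<le> Phi" and t: "real_of_int d \<le> t"
  shows "(real Q + 2) * real (card (Eset w d t)) \<le> (real Q + 1) * (t - real_of_int d) + Phi"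
proof -
  let ?n = "card (Eset w d t)"
  have "real (lenp (take ?n w)) \<le> t - real_of_int d"
  proof (cases "?n \<ge> 1")
    case True
    then show ?thesis using Eset_props(1)[OF refl True] by linarith
  next
    case False
    then have "?n = 0" by linarith
    then show ?thesis using t by simp
  qed
  then have "(real Q + 1) * real (lenp (take ?n w)) \<le> (real Q + 1) * (t - real_of_int d)"
    by (intro mult_left_mono) auto
  then show ?thesis using Eset_rel[of Q w d t] Phi[of ?n] by linarith
qed

lemma Eset_lower:
  assumes Phi: "\<And>n. \<bar>real_of_int (phi Q (take n w))\<bar> \<le> Phi" and t: "t \<le> real_of_int d + real (lenp w)"
  shows "(real Q + 2) * real (card (Eset w d t)) \<ge> (real Q + 1) * (t - real_of_int d - 2) - Phi"
proof -
  let ?n = "card (Eset w d t)"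
  have "real (lenp (take ?n w)) \<ge> t - real_of_int d - 2"
  proof (cases "?n < length w")
    case True
    have "t < real_of_int d + real (lenp (take (Suc ?n) w))" using Eset_props(2)[OF refl True] .
    moreover have "lenp (take (Suc ?n) w) = lenp (take ?n w) + tlen (w ! ?n)" using True lenp_take_Suc by blast
    moreover have "real (tlen (w ! ?n)) \<le> 2" by (simp add: tlen_def)
    ultimately show ?thesis by simp
  next
    case False
    then have "take ?n w = w" by simp
    then show ?thesis using t by simp
  qed
  then have "(real Q + 1) * real (lenp (take ?n w)) \<ge> (real Q + 1) * (t - real_of_int d - 2)"
    by (intro mult_left_mono) auto
  then show ?thesis using Eset_rel[of Q w d t] Phi[of ?n] by linarith
qed

definition ixf :: "nat list \<Rightarrow> int \<Rightarrow> nat \<Rightarrow> nat \<times> int" where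
  "ixf w d i = (w!i, d + int (lenp (take i w)))"

definition Jset :: "nat list \<Rightarrow> int \<Rightarrow> real \<Rightarrow> real \<Rightarrow> nat set" where
  "Jset w d a b = {i. i < length w \<and> a \<le> real_of_int d + real (lenp (take i w)) \<and>
       real_of_int d + real (lenp (take (Suc i) w)) \<le> b}"

lemma in1_tiles1_eq: "in1 (tiles1 w d) a b = ixf w d ` Jset w d a b"
proof (intro set_eqI iffI)
  fix p assume "p \<in> in1 (tiles1 w d) a b"
  then obtain i where i: "i < length w" "p = ixf w d i" "a \<le> real_of_int (snd p)"
    "real_of_int (snd p) + real (tlen (fst p)) \<le> b"
    unfolding in1_def tiles1_def ixf_def by auto
  then show "p \<in> ixf w d ` Jset w d a b"
    unfolding Jset_def using lenp_take_Suc[OF i(1)] by (auto simp: ixf_def)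
next
  fix p assume "p \<in> ixf w d ` Jset w d a b"
  then obtain i where i: "i \<in> Jset w d a b" "p = ixf w d i" by auto
  then show "p \<in> in1 (tiles1 w d) a b"
    unfolding Jset_def in1_def tiles1_def ixf_def using lenp_take_Suc[of i w] by auto
qed

lemma ixf_inj: "inj_on (ixf w d) (Jset w d a b)"
proof (rule inj_onI)
  fix i j assume ij: "i \<in> Jset w d a b" "j \<in> Jset w d a b" "ixf w d i = ixf w d j"
  then have eq: "lenp (take i w) = lenp (take j w)" by (simp add: ixf_def)
  show "i = j"
  proof (rule ccontr)
    assume "i \<noteq> j"
    then consider "i < j" | "j < i" by linarith
    then show False
    proof cases
      case 1 then show False using lenp_take_strict[of i j w] ij eq unfolding Jset_def by auto
    next
      case 2 then show False using lenp_take_strict[of j i w] ij eq unfolding Jset_def by auto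
    qed
  qed
qed

lemma card_in1_tiles1: "card (in1 (tiles1 w d) a b) = card (Jset w d a b)"
  unfolding in1_tiles1_eq using ixf_inj card_image by blast

lemma Jset_upper: "a \<le> b \<Longrightarrow> card (Jset w d a b) \<le> card (Eset w d b) - card (Eset w d a)"
proof -
  assume ab: "a \<le> b"
  have "Jset w d a b \<subseteq> Eset w d b - Eset w d a"
  proof
    fix i assume i: "i \<in> Jset w d a b"
    then have "i < length w" by (simp add: Jset_def)
    then have "lenp (take (Suc i) w) = lenp (take i w) + tlen (w!i)" by (rule lenp_take_Suc)
    moreover have "real (tlen (w!i)) \<ge> 1" using tlen_ge1 by simp
    ultimately show "i \<in> Eset w d b - Eset w d a" using i unfolding Jset_def Eset_def by auto
  qed
  moreover have "Eset w d a \<subseteq> Eset w d b" using ab unfolding Eset_def by auto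
  ultimately have "card (Jset w d a b) \<le> card (Eset w d b - Eset w d a)"
    by (intro card_mono) (auto simp: Eset_def)
  also have "\<dots> = card (Eset w d b) - card (Eset w d a)"
    using \<open>Eset w d a \<subseteq> Eset w d b\<close> by (intro card_Diff_subset) (auto simp: Eset_def)
  finally show ?thesis .
qed

lemma Jset_lower: "card (Eset w d b) - card (Eset w d (a+2)) \<le> card (Jset w d a b)"
proof -
  have "Eset w d b - Eset w d (a+2) \<subseteq> Jset w d a b"
  proof
    fix i assume i: "i \<in> Eset w d b - Eset w d (a+2)"
    then have "i < length w" by (simp add: Eset_def)
    then have "lenp (take (Suc i) w) = lenp (take i w) + tlen (w!i)" by (rule lenp_take_Suc)
    moreover have "real (tlen (w!i)) \<le> 2" by (simp add: tlen_def)
    ultimately show "i \<in> Jset w d a b" using i unfolding Jset_def Eset_def by auto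
  qed
  then have "card (Eset w d b - Eset w d (a+2)) \<le> card (Jset w d a b)"
    by (intro card_mono) (auto simp: Jset_def)
  moreover have "card (Eset w d b) - card (Eset w d (a+2)) \<le> card (Eset w d b - Eset w d (a+2))"
    by (rule diff_card_le_card_Diff) (auto simp: Eset_def)
  ultimately show ?thesis by linarith
qed

lemma interval_estimate:
  assumes Phi: "\<And>n. \<bar>real_of_int (phi Q (take n w))\<bar> \<le> Phi"
    and ad: "real_of_int d \<le> a" and ab: "a \<le> b" and bd: "b \<le> real_of_int d + real (lenp w)"
  shows "(real Q + 2) * real (card (in1 (tiles1 w d) a b)) \<le> (real Q + 1) * (b - a + 2) + 2 * Phi"
    and "(real Q + 2) * real (card (in1 (tiles1 w d) a b)) \<ge> (real Q + 1) * (b - a - 4) - 2 * Phi"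
proof -
  have sub: "card (Eset w d a) \<le> card (Eset w d b)"
    using ab by (intro card_mono) (auto simp: Eset_def)
  have u0: "real (card (Jset w d a b)) \<le> real (card (Eset w d b) - card (Eset w d a))"
    using Jset_upper[OF ab, of w d] by (simp only: of_nat_le_iff)
  have u: "real (card (Jset w d a b)) \<le> real (card (Eset w d b)) - real (card (Eset w d a))"
    using u0 sub by (simp add: of_nat_diff)
  have "(real Q + 2) * real (card (Jset w d a b)) \<le> (real Q + 2) * real (card (Eset w d b)) - (real Q + 2) * real (card (Eset w d a))"
    using u by (simp add: right_diff_distrib[symmetric] mult_left_mono)
  moreover have "(real Q + 2) * real (card (Eset w d b)) \<le> (real Q + 1) * (b - real_of_int d) + Phi"
    using Eset_upper[OF Phi, where d = d and t = b] ad ab by linarith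
  moreover have "(real Q + 2) * real (card (Eset w d a)) \<ge> (real Q + 1) * (a - real_of_int d - 2) - Phi"
    using Eset_lower[OF Phi, where d = d and t = a] ab bd by linarith
  ultimately show "(real Q + 2) * real (card (in1 (tiles1 w d) a b)) \<le> (real Q + 1) * (b - a + 2) + 2 * Phi"
    unfolding card_in1_tiles1 by (simp add: algebra_simps)
  have l: "real (card (Eset w d b)) - real (card (Eset w d (a+2))) \<le> real (card (Jset w d a b))"
  proof -
    have "real (card (Eset w d b) - card (Eset w d (a+2))) \<le> real (card (Jset w d a b))"
      using Jset_lower[of w d b a] by (simp only: of_nat_le_iff)
    then show ?thesis by (cases "card (Eset w d (a+2)) \<le> card (Eset w d b)") (auto simp: of_nat_diff)
  qed
  have "(real Q + 2) * real (card (Jset w d a b)) \<ge> (real Q + 2) * real (card (Eset w d b)) - (real Q + 2) * real (card (Eset w d (a+2)))"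
    using l by (simp add: right_diff_distrib[symmetric] mult_left_mono)
  moreover have "(real Q + 2) * real (card (Eset w d b)) \<ge> (real Q + 1) * (b - real_of_int d - 2) - Phi"
    using Eset_lower[OF Phi, where d = d and t = b] bd by linarith
  moreover have "(real Q + 2) * real (card (Eset w d (a+2))) \<le> (real Q + 1) * (a + 2 - real_of_int d) + Phi"
    using Eset_upper[OF Phi, where d = d and t = "a+2"] ad ab by linarith
  ultimately show "(real Q + 2) * real (card (in1 (tiles1 w d) a b)) \<ge> (real Q + 1) * (b - a - 4) - 2 * Phi"
    unfolding card_in1_tiles1 by (simp add: algebra_simps)
qed



lemma S1_estimate:
  assumes Q: "Q \<ge> 1" and k: "k \<le> Q"
    and lo: "real_of_int (wo Q m) \<le> a" and ab: "a \<le> b" and hi: "b \<le> real_of_int (wo Q m) + 2 * real (NN Q)^m"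
  shows "(real Q + 2) * real (card (in1 (S1 Q k) a b)) \<le> (real Q + 1) * (b - a + 2) + 4 * real_of_int (Phi0 Q) * (real Q + 1)^m"
    and "(real Q + 2) * real (card (in1 (S1 Q k) a b)) \<ge> (real Q + 1) * (b - a - 4) - 4 * real_of_int (Phi0 Q) * (real Q + 1)^m"
proof -
  let ?Phi = "real_of_int (Phi0 Q * (2 * (int Q + 1)^m - 1))"
  have Phi: "\<bar>real_of_int (phi Q (take n (W Q k m)))\<bar> \<le> ?Phi" for n
  proof -
    have "\<bar>phi Q (take n (W Q k m))\<bar> \<le> Phi0 Q * (2 * (int Q + 1)^m - 1)" by (rule phi_prefix_W[OF Q k])
    then have "real_of_int \<bar>phi Q (take n (W Q k m))\<bar> \<le> ?Phi" by (simp only: of_int_le_iff)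
    then show ?thesis by simp
  qed
  have hi': "b \<le> real_of_int (wo Q m) + real (lenp (W Q k m))" using hi lenp_W[OF k, of m] by simp
  have P0: "Phi0 Q \<ge> 0" by (simp add: Phi0_def)
  have "?Phi \<le> 2 * real_of_int (Phi0 Q) * (real Q + 1)^m"
  proof -
    have "?Phi = real_of_int (Phi0 Q) * (2 * (real Q + 1)^m - 1)" by simp
    also have "\<dots> \<le> real_of_int (Phi0 Q) * (2 * (real Q + 1)^m)"
      using P0 by (intro mult_left_mono) auto
    finally show ?thesis by simp
  qed
  then have PP: "2 * ?Phi \<le> 4 * real_of_int (Phi0 Q) * (real Q + 1)^m" by linarith
  have eq: "in1 (S1 Q k) a b = in1 (tiles1 (W Q k m) (wo Q m)) a b"
    using in1_window[OF k lo] hi by simp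
  show "(real Q + 2) * real (card (in1 (S1 Q k) a b)) \<le> (real Q + 1) * (b - a + 2) + 4 * real_of_int (Phi0 Q) * (real Q + 1)^m"
    using interval_estimate(1)[OF Phi lo ab hi'] PP unfolding eq by linarith
  show "(real Q + 2) * real (card (in1 (S1 Q k) a b)) \<ge> (real Q + 1) * (b - a - 4) - 4 * real_of_int (Phi0 Q) * (real Q + 1)^m"
    using interval_estimate(2)[OF Phi lo ab hi'] PP unfolding eq by linarith
qed

definition sM :: "nat \<Rightarrow> nat \<Rightarrow> real" where "sM Q M = real_of_int (wo Q (Suc M))"
definition XM :: "nat \<Rightarrow> nat \<Rightarrow> real" where "XM Q M = real (2*Q+4) * real (NN Q)^M"

lemma exact_real:
  assumes k: "k \<le> Q"
  shows "real (card (in1 (S1 Q k) (sM Q M) (sM Q M + XM Q M))) = 2*(real Q+1) * real (NN Q)^M - (real Q - real k) * (real Q + 1)^M"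
proof -
  have "real_of_int (int (card (in1 (S1 Q k) (sM Q M) (sM Q M + XM Q M)))) =
     real_of_int (2*(int Q+1) * int (NN Q)^M - (int Q - int k) * (int Q + 1)^M)"
    using exact_card[OF k, of M] unfolding sM_def XM_def by simp
  then show ?thesis by simp
qed

lemma core_B:
  assumes k: "k \<le> Q" and l: "l \<le> Q" and C: "C \<ge> 0"
    and H: "real (card (in1 (S1 Q k) (sM Q M) (sM Q M + XM Q M))) \<le>
             real (card (meet1 (S1 Q l) (sM Q M - C) (sM Q M + XM Q M + C)))"
  shows "(real k - real l) * (real Q + 1)^M \<le> 2 * C + 8"
proof -
  let ?s = "sM Q M" and ?X = "XM Q M"
  have X0: "?X \<ge> 0" by (simp add: XM_def)
  have "card (meet1 (S1 Q l) (?s - C) (?s + ?X + C)) \<le> card (in1 (S1 Q l) (?s - C - 2) (?s + ?X + C + 2))"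
    by (rule card_meet1_le[OF l])
  also have "\<dots> \<le> card (in1 (S1 Q l) (?s - C - 2) ?s) + card (in1 (S1 Q l) ?s (?s + ?X + C + 2)) + 1"
    by (rule in1_split[OF l])
  also have "card (in1 (S1 Q l) ?s (?s + ?X + C + 2)) \<le> card (in1 (S1 Q l) ?s (?s + ?X)) + card (in1 (S1 Q l) (?s + ?X) (?s + ?X + C + 2)) + 1"
    by (rule in1_split[OF l])
  finally have c: "real (card (meet1 (S1 Q l) (?s - C) (?s + ?X + C))) \<le>
     real (card (in1 (S1 Q l) (?s - C - 2) ?s)) + real (card (in1 (S1 Q l) ?s (?s + ?X))) + real (card (in1 (S1 Q l) (?s + ?X) (?s + ?X + C + 2))) + 2"
    by linarith
  have c1: "real (card (in1 (S1 Q l) (?s - C - 2) ?s)) \<le> C + 2"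
    using in1_crude[OF l, of "?s - C - 2" ?s] C by simp
  have c2: "real (card (in1 (S1 Q l) (?s + ?X) (?s + ?X + C + 2))) \<le> C + 2"
    using in1_crude[OF l, of "?s + ?X" "?s + ?X + C + 2"] C by simp
  have "real (card (in1 (S1 Q k) ?s (?s + ?X))) \<le> real (card (in1 (S1 Q l) ?s (?s + ?X))) + 2 * C + 6"
    using H c c1 c2 by linarith
  then show ?thesis unfolding exact_real[OF k] exact_real[OF l] by (simp add: algebra_simps)
qed



lemma sM_abs: "\<bar>sM Q M\<bar> \<le> real (NN Q) ^ Suc M"
proof -
  have "- wo Q (Suc M) \<le> int (NN Q) ^ Suc M - 1" by (rule wo_bounds(1))
  moreover have "wo Q (Suc M) \<le> 0" by (rule wo_nonpos)
  ultimately have "\<bar>wo Q (Suc M)\<bar> \<le> int (NN Q) ^ Suc M" by linarith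
  then have "real_of_int \<bar>wo Q (Suc M)\<bar> \<le> real_of_int (int (NN Q) ^ Suc M)" by (simp only: of_int_le_iff)
  then show ?thesis by (simp add: sM_def)
qed

lemma XM_le: "XM Q M \<le> 2 * real (NN Q) ^ Suc M" "XM Q M \<ge> 0"
proof -
  have "real (2*Q+4) \<le> 2 * real (NN Q)" by (simp add: NN_def)
  then show "XM Q M \<le> 2 * real (NN Q) ^ Suc M" unfolding XM_def by (simp add: mult_right_mono)
  show "XM Q M \<ge> 0" by (simp add: XM_def)
qed

lemma NN_pow_ge: "real (NN Q) ^ M \<ge> 2^M * (real Q + 1)^M"
proof -
  have "(2 * (real Q + 1))^M \<le> real (NN Q) ^ M" by (rule power_mono) (auto simp: NN_def)
  then show ?thesis by (simp only: power_mult_distrib)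
qed

lemma core_A:
  assumes Q: "Q \<ge> 1" and k: "k \<le> Q" and l: "l \<le> Q" and C: "C \<ge> 0" and al: "\<alpha> > 0"
    and H: "\<And>M. \<alpha> * real (card (in1 (S1 Q k) (sM Q M) (sM Q M + XM Q M))) \<le>
             real (card (meet1 (S1 Q l) ((sM Q M - C) / \<alpha>) ((sM Q M + XM Q M + C) / \<alpha>)))"
  shows "\<alpha> \<le> 1"
proof (rule ccontr)
  assume "\<not> \<alpha> \<le> 1"
  then have a1: "\<alpha> > 1" by simp
  define lam where "lam = real Q + 1"
  define Nr where "Nr = real (NN Q)"
  have lam1: "lam \<ge> 1" by (simp add: lam_def)
  have Nr1: "Nr \<ge> 1" by (simp add: Nr_def NN_def)
  obtain t where t: "(3 + C) / \<alpha> + 2 \<le> 2 * Nr ^ t" using exists_pow_ge unfolding Nr_def by blast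
  define P0 where "P0 = real_of_int (Phi0 Q)"
  have P00: "P0 \<ge> 0" by (simp add: P0_def Phi0_def)
  define D where "D = \<alpha> - 1 / \<alpha>"
  have D0: "D > 0" unfolding D_def using a1 by (simp add: field_simps less_1_mult)
  define K where "K = \<alpha> * (real Q + 2) * real Q + (real Q + 1) * (2 * C / \<alpha> + 6) + 4 * P0 * lam ^ (2 + t)"
  have main: "D * 2^M \<le> K" for M
  proof -
    let ?s = "sM Q M" and ?X = "XM Q M"
    define a' where "a' = (?s - C) / \<alpha> - 2"
    define b' where "b' = (?s + ?X + C) / \<alpha> + 2"
    have X0: "?X \<ge> 0" by (rule XM_le(2))
    have "(?s - C) / \<alpha> \<le> (?s + ?X + C) / \<alpha>" using X0 C al by (intro divide_right_mono) auto
    then have ab: "a' \<le> b'" unfolding a'_def b'_def by linarith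
    have NM1: "Nr ^ Suc M \<ge> 1" by (rule one_le_power[OF Nr1])
    have bnd: "(\<bar>?s\<bar> + ?X + C) / \<alpha> + 2 \<le> 2 * Nr ^ (M + 1 + t)"
    proof -
      have "\<bar>?s\<bar> + ?X + C \<le> 3 * Nr ^ Suc M + C" using sM_abs[of Q M] XM_le(1)[of Q M] unfolding Nr_def by linarith
      also have "\<dots> \<le> (3 + C) * Nr ^ Suc M"
      proof -
        have "C * 1 \<le> C * Nr ^ Suc M" using mult_left_mono[OF NM1 C] .
        then show ?thesis by (simp add: ring_distribs)
      qed
      finally have "(\<bar>?s\<bar> + ?X + C) / \<alpha> \<le> (3 + C) * Nr ^ Suc M / \<alpha>" using al by (simp add: divide_right_mono)
      moreover have "2 \<le> 2 * Nr ^ Suc M" using NM1 by simp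
      ultimately have "(\<bar>?s\<bar> + ?X + C) / \<alpha> + 2 \<le> ((3 + C) / \<alpha> + 2) * Nr ^ Suc M" by (simp add: algebra_simps)
      also have "\<dots> \<le> 2 * Nr ^ t * Nr ^ Suc M" using t NM1 by (intro mult_right_mono) auto
      also have "\<dots> = 2 * Nr ^ (M + 1 + t)" by (simp add: power_add)
      finally show ?thesis .
    qed
    have Ra: "\<bar>a'\<bar> \<le> 2 * Nr ^ (M + 1 + t)"
    proof -
      have "\<bar>a'\<bar> \<le> \<bar>(?s - C) / \<alpha>\<bar> + \<bar>2\<bar>" unfolding a'_def by (rule abs_triangle_ineq4)
      also have "\<bar>(?s - C) / \<alpha>\<bar> = \<bar>?s - C\<bar> / \<alpha>" using al by (simp add: abs_divide)
      also have "\<bar>?s - C\<bar> / \<alpha> \<le> (\<bar>?s\<bar> + C) / \<alpha>" using al C by (intro divide_right_mono) auto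
      finally have "\<bar>a'\<bar> \<le> (\<bar>?s\<bar> + C) / \<alpha> + 2" by simp
      also have "\<dots> \<le> (\<bar>?s\<bar> + ?X + C) / \<alpha> + 2" using X0 al by (simp add: divide_right_mono)
      finally show ?thesis using bnd by linarith
    qed
    have Rb: "\<bar>b'\<bar> \<le> 2 * Nr ^ (M + 1 + t)"
    proof -
      have "\<bar>b'\<bar> \<le> \<bar>(?s + ?X + C) / \<alpha>\<bar> + \<bar>2\<bar>" unfolding b'_def by (rule abs_triangle_ineq)
      also have "\<bar>(?s + ?X + C) / \<alpha>\<bar> = \<bar>?s + ?X + C\<bar> / \<alpha>" using al by (simp add: abs_divide)
      finally have "\<bar>b'\<bar> \<le> \<bar>?s + ?X + C\<bar> / \<alpha> + 2" by simp
      also have "\<dots> \<le> (\<bar>?s\<bar> + ?X + C) / \<alpha> + 2" using X0 C al by (simp add: divide_right_mono)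
      finally show ?thesis using bnd by linarith
    qed
    have R: "max \<bar>a'\<bar> \<bar>b'\<bar> \<le> 2 * real (NN Q) ^ (M + 1 + t)" using Ra Rb unfolding Nr_def by simp
    note w = window_for[OF R]
    have lo: "real_of_int (wo Q (Suc (M + 1 + t))) \<le> a'" using w(1) by linarith
    have hi: "b' \<le> real_of_int (wo Q (Suc (M + 1 + t))) + 2 * real (NN Q) ^ Suc (M + 1 + t)" using w(2) by linarith
    have est: "(real Q + 2) * real (card (in1 (S1 Q l) a' b')) \<le> (real Q + 1) * (b' - a' + 2) + 4 * P0 * lam ^ Suc (M + 1 + t)"
      using S1_estimate(1)[OF Q l lo ab hi] unfolding P0_def lam_def .
    have meet: "real (card (meet1 (S1 Q l) ((?s - C) / \<alpha>) ((?s + ?X + C) / \<alpha>))) \<le> real (card (in1 (S1 Q l) a' b'))"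
      using card_meet1_le[OF l] unfolding a'_def b'_def by (simp only: of_nat_le_iff)
    have ck: "real (card (in1 (S1 Q k) ?s (?s + ?X))) \<ge> 2 * (real Q + 1) * Nr^M - real Q * lam^M"
    proof -
      have "(real Q - real k) * lam^M \<le> real Q * lam^M" using lam1 by (intro mult_right_mono) auto
      then show ?thesis unfolding exact_real[OF k] Nr_def lam_def by linarith
    qed
    have bma: "b' - a' = (?X + 2 * C) / \<alpha> + 4" unfolding a'_def b'_def using al by (simp add: field_simps)
    have XN: "?X = (2 * real Q + 4) * Nr ^ M" by (simp add: XM_def Nr_def)
    have lampow: "lam ^ Suc (M + 1 + t) = lam ^ (2 + t) * lam ^ M" by (simp add: power_add[symmetric] algebra_simps)
    have step1: "(real Q + 2) * (\<alpha> * (2 * (real Q + 1) * Nr^M - real Q * lam^M)) \<le>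
        (real Q + 1) * ((?X + 2 * C) / \<alpha> + 6) + 4 * P0 * lam ^ (2 + t) * lam ^ M"
    proof -
      have "\<alpha> * (2 * (real Q + 1) * Nr^M - real Q * lam^M) \<le> \<alpha> * real (card (in1 (S1 Q k) ?s (?s + ?X)))"
        using ck al by (intro mult_left_mono) auto
      also have "\<dots> \<le> real (card (in1 (S1 Q l) a' b'))" using H[of M] meet by linarith
      finally have "(real Q + 2) * (\<alpha> * (2 * (real Q + 1) * Nr^M - real Q * lam^M)) \<le> (real Q + 2) * real (card (in1 (S1 Q l) a' b'))"
        by (intro mult_left_mono) auto
      also have "\<dots> \<le> (real Q + 1) * (b' - a' + 2) + 4 * P0 * lam ^ Suc (M + 1 + t)" by (rule est)
      finally show ?thesis unfolding bma lampow by (simp add: algebra_simps)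
    qed
    have Xexp: "(real Q + 2) * (2 * (real Q + 1) * Nr^M) = (real Q + 1) * ?X" unfolding XN by (simp add: algebra_simps)
    have step2: "(real Q + 1) * ?X * D \<le> \<alpha> * (real Q + 2) * real Q * lam^M + (real Q + 1) * (2 * C / \<alpha> + 6) + 4 * P0 * lam ^ (2 + t) * lam ^ M"
    proof -
      have "(real Q + 1) * ((?X + 2 * C) / \<alpha> + 6) = (real Q + 1) * ?X / \<alpha> + (real Q + 1) * (2 * C / \<alpha> + 6)"
        using al by (simp add: field_simps)
      moreover have "(real Q + 2) * (\<alpha> * (2 * (real Q + 1) * Nr^M - real Q * lam^M)) =
          \<alpha> * ((real Q + 1) * ?X) - \<alpha> * (real Q + 2) * real Q * lam^M"
      proof -
        have "(real Q + 2) * (\<alpha> * (2 * (real Q + 1) * Nr^M - real Q * lam^M)) =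
          \<alpha> * ((real Q + 2) * (2 * (real Q + 1) * Nr^M)) - \<alpha> * (real Q + 2) * real Q * lam^M"
          by (simp add: algebra_simps)
        then show ?thesis by (simp only: Xexp)
      qed
      moreover have "(real Q + 1) * ?X * D = \<alpha> * ((real Q + 1) * ?X) - (real Q + 1) * ?X / \<alpha>"
        unfolding D_def using al by (simp add: algebra_simps add_divide_distrib)
      ultimately show ?thesis using step1 by linarith
    qed
    have lamM1: "lam ^ M \<ge> 1" by (rule one_le_power[OF lam1])
    have rhs: "\<alpha> * (real Q + 2) * real Q * lam^M + (real Q + 1) * (2 * C / \<alpha> + 6) + 4 * P0 * lam ^ (2 + t) * lam ^ M \<le> K * lam ^ M"
    proof -
      have "(real Q + 1) * (2 * C / \<alpha> + 6) \<le> (real Q + 1) * (2 * C / \<alpha> + 6) * lam ^ M"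
      proof -
        have "2 * C / \<alpha> \<ge> 0" using C al by simp
        then have nn: "(real Q + 1) * (2 * C / \<alpha> + 6) \<ge> 0" by simp
        show ?thesis using mult_left_mono[OF lamM1 nn] by simp
      qed
      then show ?thesis unfolding K_def by (simp add: algebra_simps)
    qed
    have lhs: "D * 2^M * lam^M \<le> (real Q + 1) * ?X * D"
    proof -
      have "2^M * lam^M \<le> Nr^M" using NN_pow_ge[where Q=Q and M=M] unfolding Nr_def lam_def .
      also have "\<dots> \<le> ?X" unfolding XN using Nr1 by (simp add: mult_le_cancel_right1)
      also have "\<dots> \<le> (real Q + 1) * ?X" using X0 by (simp add: mult_le_cancel_right1)
      finally have "2^M * lam^M \<le> (real Q + 1) * ?X" .
      then have "D * (2^M * lam^M) \<le> D * ((real Q + 1) * ?X)" using D0 by (intro mult_left_mono) auto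
      then show ?thesis by (simp add: algebra_simps)
    qed
    have "D * 2^M * lam^M \<le> K * lam^M" using lhs step2 rhs by linarith
    then show "D * 2^M \<le> K" using lamM1 by simp
  qed
  obtain M where M: "K / D < 2 ^ M" using real_arch_pow[of 2 "K / D"] by auto
  then have "K < D * 2^M" using D0 by (simp add: field_simps)
  then show False using main[of M] by linarith
qed



definition vp :: "real \<Rightarrow> real \<Rightarrow> pt" where "vp x y = vector [x, y]"

lemma vp_nth[simp]: "vp x y $ 1 = x" "vp x y $ 2 = y"
  by (simp_all add: vp_def)

lemma pt_eq_iff: "(z::pt) = z' \<longleftrightarrow> z $ 1 = z' $ 1 \<and> z $ 2 = z' $ 2"
  by (metis exhaust_2 vec_eq_iff)

lemma vp_eq_iff[simp]: "vp x y = vp x' y' \<longleftrightarrow> x = x' \<and> y = y'"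
  by (simp add: pt_eq_iff)

lemma vp_add: "vp x y + vp x' y' = vp (x + x') (y + y')"
  by (simp add: pt_eq_iff)

lemma vp_scale: "c *\<^sub>R vp x y = vp (c * x) (c * y)"
  by (simp add: pt_eq_iff)

lemma vp_zero: "(0::pt) = vp 0 0"
  by (simp add: pt_eq_iff)

lemma pt_vp: "(z::pt) = vp (z$1) (z$2)"
  by (simp add: pt_eq_iff)

definition F0 :: "pt set list" where "F0 = [cbox 0 (vp 2 1), cbox 0 (vp 1 1)]"

lemma F0_nth: "a < 2 \<Longrightarrow> F0 ! a = cbox 0 (vp (real (tlen a)) 1)"
  by (cases a) (auto simp: F0_def tlen_def)

lemma length_F0[simp]: "length F0 = 2" by (simp add: F0_def)

lemma mem_cbox_pt: "z \<in> cbox (u::pt) v \<longleftrightarrow> u$1 \<le> z$1 \<and> z$1 \<le> v$1 \<and> u$2 \<le> z$2 \<and> z$2 \<le> v$2"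
  unfolding mem_box_cart(2) forall_2 by auto

lemma mem_box_pt: "z \<in> box (u::pt) v \<longleftrightarrow> u$1 < z$1 \<and> z$1 < v$1 \<and> u$2 < z$2 \<and> z$2 < v$2"
  unfolding mem_box_cart(1) forall_2 by auto

lemma placed_vp: "a < 2 \<Longrightarrow> placed F0 (a, vp x y) = cbox (vp x y) (vp (x + real (tlen a)) (y + 1))"
proof -
  assume a: "a < 2"
  have "placed F0 (a, vp x y) = (\<lambda>z. z + vp x y) ` cbox 0 (vp (real (tlen a)) 1)"
    using F0_nth[OF a] by (simp add: placed_def)
  also have "\<dots> = (\<lambda>z. vp x y + z) ` cbox 0 (vp (real (tlen a)) 1)" by (simp add: add.commute)
  also have "\<dots> = cbox (vp x y + 0) (vp x y + vp (real (tlen a)) 1)"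
    by (rule cbox_translation[symmetric])
  finally show ?thesis by (simp add: vp_add)
qed

lemma mem_placed: "a < 2 \<Longrightarrow> z \<in> placed F0 (a, vp x y) \<longleftrightarrow>
   x \<le> z$1 \<and> z$1 \<le> x + real (tlen a) \<and> y \<le> z$2 \<and> z$2 \<le> y + 1"
  by (simp add: placed_vp mem_cbox_pt)

lemma mem_interior_placed: "a < 2 \<Longrightarrow> z \<in> interior (placed F0 (a, vp x y)) \<longleftrightarrow>
   x < z$1 \<and> z$1 < x + real (tlen a) \<and> y < z$2 \<and> z$2 < y + 1"
  by (simp add: placed_vp mem_box_pt)

lemma prototiles_F0: "prototiles F0"
proof -
  have "is_tile (cbox 0 (vp c 1))" if "c > 0" for c
  proof -
    have "vp (c/2) (1/2) \<in> box 0 (vp c 1)" using that by (simp add: mem_box_pt)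
    then have ne: "box 0 (vp c 1) \<noteq> {}" by blast
    have "cbox 0 (vp c 1) \<noteq> {}" using ne box_subset_cbox by blast
    moreover have "closure (interior (cbox 0 (vp c 1))) = cbox 0 (vp c 1)" using ne by simp
    ultimately show ?thesis unfolding is_tile_def by simp
  qed
  then show ?thesis unfolding prototiles_def F0_def by auto
qed

definition tiles2D :: "(nat \<times> int) set \<Rightarrow> int set \<Rightarrow> (nat \<times> pt) set" where
  "tiles2D S Y = {(a, vp (real_of_int x) (real_of_int y)) | a x y. (a, x) \<in> S \<and> y \<in> Y}"

definition Sep :: "(nat \<times> int) set \<Rightarrow> bool" where
  "Sep S \<longleftrightarrow> (\<forall>p\<in>S. \<forall>p'\<in>S. p \<noteq> p' \<longrightarrow>
      snd p + int (tlen (fst p)) \<le> snd p' \<or> snd p' + int (tlen (fst p')) \<le> snd p)"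

definition Let2 :: "(nat \<times> int) set \<Rightarrow> bool" where
  "Let2 S \<longleftrightarrow> (\<forall>p\<in>S. fst p < 2)"

lemma tess_tiles2D:
  assumes L: "Let2 S" and Sp: "Sep S"
  shows "tess F0 (tiles2D S Y)"
  unfolding tess_def
proof (intro conjI ballI impI)
  fix p assume "p \<in> tiles2D S Y"
  then show "fst p < length F0" using L unfolding tiles2D_def Let2_def by auto
next
  fix p p' assume p: "p \<in> tiles2D S Y" and p': "p' \<in> tiles2D S Y" and ne: "p \<noteq> p'"
  obtain a x y where axy: "p = (a, vp (real_of_int x) (real_of_int y))" "(a, x) \<in> S" "y \<in> Y"
    using p unfolding tiles2D_def by auto
  obtain a' x' y' where axy': "p' = (a', vp (real_of_int x') (real_of_int y'))" "(a', x') \<in> S" "y' \<in> Y"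
    using p' unfolding tiles2D_def by auto
  have a2: "a < 2" "a' < 2" using L axy(2) axy'(2) unfolding Let2_def by auto
  show "interior (placed F0 p) \<inter> interior (placed F0 p') = {}"
  proof (rule ccontr)
    assume "interior (placed F0 p) \<inter> interior (placed F0 p') \<noteq> {}"
    then obtain z where z: "z \<in> interior (placed F0 p)" "z \<in> interior (placed F0 p')" by blast
    have zz: "real_of_int x < z$1" "z$1 < real_of_int x + real (tlen a)" "real_of_int y < z$2" "z$2 < real_of_int y + 1"
      using z(1) unfolding axy(1) mem_interior_placed[OF a2(1)] by auto
    have zz': "real_of_int x' < z$1" "z$1 < real_of_int x' + real (tlen a')" "real_of_int y' < z$2" "z$2 < real_of_int y' + 1"
      using z(2) unfolding axy'(1) mem_interior_placed[OF a2(2)] by auto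
    have "y = y'" using zz(3,4) zz'(3,4) by linarith
    then have ne2: "(a, x) \<noteq> (a', x')" using ne axy(1) axy'(1) by auto
    from Sp axy(2) axy'(2) ne2 have "x + int (tlen a) \<le> x' \<or> x' + int (tlen a') \<le> x"
      unfolding Sep_def by force
    then show False
    proof
      assume "x + int (tlen a) \<le> x'"
      then have "real_of_int (x + int (tlen a)) \<le> real_of_int x'" by (simp only: of_int_le_iff)
      then show False using zz zz' by simp
    next
      assume "x' + int (tlen a') \<le> x"
      then have "real_of_int (x' + int (tlen a')) \<le> real_of_int x" by (simp only: of_int_le_iff)
      then show False using zz zz' by simp
    qed
  qed
qed

lemma supp_tiles2D:
  assumes L: "Let2 S"
  shows "supp F0 (tiles2D S Y) = {z::pt. (\<exists>(a, x)\<in>S. real_of_int x \<le> z$1 \<and> z$1 \<le> real_of_int x + real (tlen a)) \<and>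
      (\<exists>y\<in>Y. real_of_int y \<le> z$2 \<and> z$2 \<le> real_of_int y + 1)}"
proof (intro set_eqI iffI)
  fix z assume "z \<in> supp F0 (tiles2D S Y)"
  then obtain p where p: "p \<in> tiles2D S Y" "z \<in> placed F0 p" unfolding supp_def by auto
  obtain a x y where axy: "p = (a, vp (real_of_int x) (real_of_int y))" "(a, x) \<in> S" "y \<in> Y"
    using p unfolding tiles2D_def by auto
  have a2: "a < 2" using L axy(2) unfolding Let2_def by auto
  show "z \<in> {z::pt. (\<exists>(a, x)\<in>S. real_of_int x \<le> z$1 \<and> z$1 \<le> real_of_int x + real (tlen a)) \<and>
      (\<exists>y\<in>Y. real_of_int y \<le> z$2 \<and> z$2 \<le> real_of_int y + 1)}"
    using p(2) axy unfolding axy(1) mem_placed[OF a2] by auto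
next
  fix z assume "z \<in> {z::pt. (\<exists>(a, x)\<in>S. real_of_int x \<le> z$1 \<and> z$1 \<le> real_of_int x + real (tlen a)) \<and>
      (\<exists>y\<in>Y. real_of_int y \<le> z$2 \<and> z$2 \<le> real_of_int y + 1)}"
  then obtain a x y where axy: "(a, x) \<in> S" "real_of_int x \<le> z$1" "z$1 \<le> real_of_int x + real (tlen a)"
    "y \<in> Y" "real_of_int y \<le> z$2" "z$2 \<le> real_of_int y + 1" by auto
  have a2: "a < 2" using L axy(1) unfolding Let2_def by auto
  have "(a, vp (real_of_int x) (real_of_int y)) \<in> tiles2D S Y" using axy unfolding tiles2D_def by auto
  moreover have "z \<in> placed F0 (a, vp (real_of_int x) (real_of_int y))"
    unfolding mem_placed[OF a2] using axy by auto
  ultimately show "z \<in> supp F0 (tiles2D S Y)" unfolding supp_def by auto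
qed



definition rhoK :: "nat \<Rightarrow> nat \<Rightarrow> nat \<Rightarrow> (nat \<times> pt) set" where
  "rhoK Q k a = tiles2D (tiles1 (sg Q k a) 0) {0..<int (NN Q)}"

lemma tiles1_shift: "(b, X) \<in> tiles1 w (d + c) \<longleftrightarrow> (b, X - c) \<in> tiles1 w d"
  unfolding tiles1_def by (auto simp: algebra_simps)

lemma mem_tiles2D: "(b, z) \<in> tiles2D S Y \<longleftrightarrow> (\<exists>x y. (b, x) \<in> S \<and> y \<in> Y \<and> z = vp (real_of_int x) (real_of_int y))"
  unfolding tiles2D_def by auto

lemma rows_split:
  assumes N: "N > 0"
  shows "(Y::int) \<in> {0..<N*h} \<longleftrightarrow> (\<exists>y y'. y \<in> {0..<h} \<and> y' \<in> {0..<N} \<and> Y = y' + N * y)"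
proof
  assume Y: "Y \<in> {0..<N*h}"
  have "Y = Y mod N + N * (Y div N)" by simp
  moreover have "Y mod N \<in> {0..<N}" using N by simp
  moreover have "Y div N \<in> {0..<h}"
  proof -
    have "0 \<le> Y div N" using Y N by (simp add: pos_imp_zdiv_nonneg_iff)
    moreover have "Y div N < h"
    proof (rule ccontr)
      assume "\<not> Y div N < h"
      then have "N * h \<le> N * (Y div N)" using N by (intro mult_left_mono) auto
      moreover have "N * (Y div N) \<le> Y" using N mult_div_mod_eq[of N Y] pos_mod_sign[of N Y] by linarith
      ultimately show False using Y by simp
    qed
    ultimately show ?thesis by simp
  qed
  ultimately show "\<exists>y y'. y \<in> {0..<h} \<and> y' \<in> {0..<N} \<and> Y = y' + N * y" by blast
next
  assume "\<exists>y y'. y \<in> {0..<h} \<and> y' \<in> {0..<N} \<and> Y = y' + N * y"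
  then obtain y y' where yy: "y \<in> {0..<h}" "y' \<in> {0..<N}" "Y = y' + N * y" by blast
  have "N * y + y' < N * y + N" using yy by simp
  also have "\<dots> = N * (y + 1)" by (simp add: algebra_simps)
  also have "\<dots> \<le> N * h" using yy N by (intro mult_left_mono) auto
  finally show "Y \<in> {0..<N*h}" using yy N by (simp add: add.commute)
qed

lemma subst_ext_tiles2D:
  assumes k: "k \<le> Q"
  shows "subst_ext (real (NN Q)) (rhoK Q k) (tiles2D (tiles1 w d) {0..<h}) =
         tiles2D (tiles1 (sgw Q k w) (int (NN Q) * d)) {0..<int (NN Q) * h}"
proof (intro set_eqI)
  fix q :: "nat \<times> pt"
  obtain b z where q: "q = (b, z)" by force
  let ?N = "int (NN Q)"
  have N0: "?N > 0" by (simp add: NN_def)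
  have "q \<in> subst_ext (real (NN Q)) (rhoK Q k) (tiles2D (tiles1 w d) {0..<h}) \<longleftrightarrow>
    (\<exists>a x y x' y'. (a, x) \<in> tiles1 w d \<and> y \<in> {0..<h} \<and> (b, x') \<in> tiles1 (sg Q k a) 0 \<and> y' \<in> {0..<?N} \<and>
       z = vp (real_of_int (x' + ?N * x)) (real_of_int (y' + ?N * y)))"
  proof
    assume "q \<in> subst_ext (real (NN Q)) (rhoK Q k) (tiles2D (tiles1 w d) {0..<h})"
    then obtain i t j s where its: "(i, t) \<in> tiles2D (tiles1 w d) {0..<h}" "(j, s) \<in> rhoK Q k i"
      "q = (j, s + real (NN Q) *\<^sub>R t)"
      unfolding subst_ext_def by auto
    obtain x y where xy: "(i, x) \<in> tiles1 w d" "y \<in> {0..<h}" "t = vp (real_of_int x) (real_of_int y)"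
      using its(1) mem_tiles2D by blast
    obtain x' y' where xy': "(j, x') \<in> tiles1 (sg Q k i) 0" "y' \<in> {0..<?N}" "s = vp (real_of_int x') (real_of_int y')"
      using its(2) mem_tiles2D[of j s] unfolding rhoK_def by blast
    have "z = vp (real_of_int (x' + ?N * x)) (real_of_int (y' + ?N * y))"
      using its(3) xy(3) xy'(3) q by (simp add: vp_add vp_scale)
    then show "\<exists>a x y x' y'. (a, x) \<in> tiles1 w d \<and> y \<in> {0..<h} \<and> (b, x') \<in> tiles1 (sg Q k a) 0 \<and> y' \<in> {0..<?N} \<and>
       z = vp (real_of_int (x' + ?N * x)) (real_of_int (y' + ?N * y))"
      using xy xy' its(3) q by blast
  next
    assume "\<exists>a x y x' y'. (a, x) \<in> tiles1 w d \<and> y \<in> {0..<h} \<and> (b, x') \<in> tiles1 (sg Q k a) 0 \<and> y' \<in> {0..<?N} \<and>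
       z = vp (real_of_int (x' + ?N * x)) (real_of_int (y' + ?N * y))"
    then obtain a x y x' y' where e: "(a, x) \<in> tiles1 w d" "y \<in> {0..<h}" "(b, x') \<in> tiles1 (sg Q k a) 0" "y' \<in> {0..<?N}"
       "z = vp (real_of_int (x' + ?N * x)) (real_of_int (y' + ?N * y))" by blast
    have t: "(a, vp (real_of_int x) (real_of_int y)) \<in> tiles2D (tiles1 w d) {0..<h}" using e by (auto simp: tiles2D_def)
    have s: "(b, vp (real_of_int x') (real_of_int y')) \<in> rhoK Q k a" using e by (auto simp: tiles2D_def rhoK_def)
    have "q = (b, vp (real_of_int x') (real_of_int y') + real (NN Q) *\<^sub>R vp (real_of_int x) (real_of_int y))"
      using e(5) q by (simp add: vp_add vp_scale)
    then show "q \<in> subst_ext (real (NN Q)) (rhoK Q k) (tiles2D (tiles1 w d) {0..<h})"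
      unfolding subst_ext_def using t s by force
  qed
  also have "\<dots> \<longleftrightarrow> (\<exists>X Y. (b, X) \<in> tiles1 (sgw Q k w) (?N * d) \<and> Y \<in> {0..<?N * h} \<and>
       z = vp (real_of_int X) (real_of_int Y))"
  proof -
    have A: "(b, X) \<in> tiles1 (sgw Q k w) (?N * d) \<longleftrightarrow> (\<exists>a x x'. (a, x) \<in> tiles1 w d \<and> (b, x') \<in> tiles1 (sg Q k a) 0 \<and> X = x' + ?N * x)" for X
    proof -
      have "(b, X) \<in> tiles1 (sgw Q k w) (?N * d) \<longleftrightarrow> (\<exists>(a, x)\<in>tiles1 w d. (b, X) \<in> tiles1 (sg Q k a) (?N * x))"
        unfolding tiles1_subst[OF k, symmetric] by blast
      also have "\<dots> \<longleftrightarrow> (\<exists>a x x'. (a, x) \<in> tiles1 w d \<and> (b, x') \<in> tiles1 (sg Q k a) 0 \<and> X = x' + ?N * x)"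
      proof
        assume "\<exists>(a, x)\<in>tiles1 w d. (b, X) \<in> tiles1 (sg Q k a) (?N * x)"
        then obtain a x where ax: "(a, x) \<in> tiles1 w d" "(b, X) \<in> tiles1 (sg Q k a) (?N * x)" by blast
        have "(b, X - ?N * x) \<in> tiles1 (sg Q k a) 0" using ax(2) tiles1_shift[of b X "sg Q k a" 0 "?N * x"] by simp
        then show "\<exists>a x x'. (a, x) \<in> tiles1 w d \<and> (b, x') \<in> tiles1 (sg Q k a) 0 \<and> X = x' + ?N * x"
          using ax(1) by force
      next
        assume "\<exists>a x x'. (a, x) \<in> tiles1 w d \<and> (b, x') \<in> tiles1 (sg Q k a) 0 \<and> X = x' + ?N * x"
        then obtain a x x' where ax: "(a, x) \<in> tiles1 w d" "(b, x') \<in> tiles1 (sg Q k a) 0" "X = x' + ?N * x" by blast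
        have "(b, X) \<in> tiles1 (sg Q k a) (?N * x)" using ax(2,3) tiles1_shift[of b X "sg Q k a" 0 "?N * x"] by simp
        then show "\<exists>(a, x)\<in>tiles1 w d. (b, X) \<in> tiles1 (sg Q k a) (?N * x)" using ax(1) by blast
      qed
      finally show ?thesis .
    qed
    show ?thesis unfolding A rows_split[OF N0] by blast
  qed
  also have "\<dots> \<longleftrightarrow> q \<in> tiles2D (tiles1 (sgw Q k w) (?N * d)) {0..<?N * h}"
    unfolding q mem_tiles2D by blast
  finally show "q \<in> subst_ext (real (NN Q)) (rhoK Q k) (tiles2D (tiles1 w d) {0..<h}) \<longleftrightarrow>
      q \<in> tiles2D (tiles1 (sgw Q k w) (?N * d)) {0..<?N * h}" .
qed

lemma subst_iter:
  assumes k: "k \<le> Q"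
  shows "(subst_ext (real (NN Q)) (rhoK Q k) ^^ m) {(0, 0)} = tiles2D (tiles1 (W Q k m) 0) {0..<int (NN Q) ^ m}"
proof (induction m)
  case 0
  have "tiles2D (tiles1 [0] 0) {0..<1} = {(0, 0)}"
    by (auto simp: tiles2D_def tiles1_def vp_zero)
  then show ?case by (simp add: W_def)
next
  case (Suc m)
  have "W Q k (Suc m) = sgw Q k (W Q k m)" by (simp add: W_def)
  then show ?case using subst_ext_tiles2D[OF k, of "W Q k m" 0 "int (NN Q) ^ m"] Suc
    by simp
qed



definition Tk :: "nat \<Rightarrow> nat \<Rightarrow> (nat \<times> pt) set" where "Tk Q k = tiles2D (S1 Q k) UNIV"

lemma Let2_S1: "Let2 (S1 Q k)" unfolding Let2_def using S1_letters by force
lemma Sep_S1: "k \<le> Q \<Longrightarrow> Sep (S1 Q k)" unfolding Sep_def using S1_sep by blast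
lemma Sep_tiles1: "Sep (tiles1 w d)" unfolding Sep_def using tiles1_sep by blast
lemma Let2_tiles1_sg: "Let2 (tiles1 (sg Q k a) d)"
  unfolding Let2_def using letters_sg[of Q k a] by (force dest: tiles1_letter)

lemma tiles2D_finite: "finite S \<Longrightarrow> finite Y \<Longrightarrow> finite (tiles2D S Y)"
proof -
  assume "finite S" "finite Y"
  moreover have "tiles2D S Y = (\<lambda>((a, x), y). (a, vp (real_of_int x) (real_of_int y))) ` (S \<times> Y)"
    unfolding tiles2D_def by force
  ultimately show ?thesis by simp
qed

lemma is_tiling_Tk: "k \<le> Q \<Longrightarrow> is_tiling F0 (Tk Q k)"
proof -
  assume k: "k \<le> Q"
  have "supp F0 (Tk Q k) = UNIV"
  proof -
    have "z \<in> supp F0 (Tk Q k)" for z :: pt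
    proof -
      have "\<exists>(a, x)\<in>S1 Q k. real_of_int x \<le> z$1 \<and> z$1 \<le> real_of_int x + real (tlen a)"
        by (rule S1_cover[OF k])
      moreover have "\<exists>y\<in>(UNIV::int set). real_of_int y \<le> z$2 \<and> z$2 \<le> real_of_int y + 1"
        using floor_correct[of "z$2"] by (intro bexI[of _ "\<lfloor>z$2\<rfloor>"]) auto
      ultimately show ?thesis unfolding Tk_def supp_tiles2D[OF Let2_S1] by blast
    qed
    then show ?thesis by auto
  qed
  then show ?thesis unfolding is_tiling_def Tk_def using tess_tiles2D[OF Let2_S1 Sep_S1[OF k]] by simp
qed

lemma bound_patch:
  assumes k: "k \<le> Q"
  shows "finite P \<Longrightarrow> P \<subseteq> Tk Q k \<Longrightarrow> \<exists>M. \<forall>p\<in>P. \<exists>a x y. p = (a, vp (real_of_int x) (real_of_int y)) \<and>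
      (a, x) \<in> tiles1 (W Q k M) (wo Q M) \<and> \<bar>y\<bar> \<le> int M"
proof (induction P rule: finite_induct)
  case empty
  then show ?case by auto
next
  case (insert p P)
  then obtain M where M: "\<forall>p\<in>P. \<exists>a x y. p = (a, vp (real_of_int x) (real_of_int y)) \<and>
      (a, x) \<in> tiles1 (W Q k M) (wo Q M) \<and> \<bar>y\<bar> \<le> int M" by auto
  obtain a x y where axy: "p = (a, vp (real_of_int x) (real_of_int y))" "(a, x) \<in> S1 Q k"
    using insert.prems unfolding Tk_def tiles2D_def by auto
  obtain m where m: "(a, x) \<in> tiles1 (W Q k m) (wo Q m)" using axy(2) unfolding S1_def by auto
  define M' where "M' = max M (max m (nat \<bar>y\<bar>))"
  have "\<forall>p\<in>insert p P. \<exists>a x y. p = (a, vp (real_of_int x) (real_of_int y)) \<and>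
      (a, x) \<in> tiles1 (W Q k M') (wo Q M') \<and> \<bar>y\<bar> \<le> int M'"
  proof
    fix q assume "q \<in> insert p P"
    then show "\<exists>a x y. q = (a, vp (real_of_int x) (real_of_int y)) \<and>
      (a, x) \<in> tiles1 (W Q k M') (wo Q M') \<and> \<bar>y\<bar> \<le> int M'"
    proof
      assume "q = p"
      moreover have "(a, x) \<in> tiles1 (W Q k M') (wo Q M')"
      proof -
        have mM: "m \<le> M'" unfolding M'_def by simp
        show ?thesis using m nest_mono[OF k mM] by blast
      qed
      moreover have "\<bar>y\<bar> \<le> int M'" unfolding M'_def by linarith
      ultimately show ?thesis using axy(1) by blast
    next
      assume "q \<in> P"
      then obtain a' x' y' where q: "q = (a', vp (real_of_int x') (real_of_int y'))"
        "(a', x') \<in> tiles1 (W Q k M) (wo Q M)" "\<bar>y'\<bar> \<le> int M" using M by blast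
      moreover have "(a', x') \<in> tiles1 (W Q k M') (wo Q M')"
      proof -
        have mM: "M \<le> M'" unfolding M'_def by simp
        show ?thesis using q(2) nest_mono[OF k mM] by blast
      qed
      moreover have "\<bar>y'\<bar> \<le> int M'" using q(3) unfolding M'_def by linarith
      ultimately show ?thesis by blast
    qed
  qed
  then show ?case by blast
qed

lemma two_M_less: "2 * int M < int (NN Q) ^ Suc M"
proof -
  have "M < 2 ^ M" by (rule less_exp)
  also have "2 ^ M \<le> NN Q ^ M" by (rule power_mono) (auto simp: NN_def)
  finally have "2 * M < 3 * NN Q ^ M" by linarith
  also have "3 * NN Q ^ M \<le> NN Q ^ Suc M" by (simp add: NN_def)
  finally have "2 * M < NN Q ^ Suc M" .
  then show ?thesis by (metis of_nat_less_iff of_nat_mult of_nat_numeral of_nat_power)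
qed

lemma legal_Tk:
  assumes k: "k \<le> Q" and P: "P \<subseteq> Tk Q k" "finite P"
  shows "\<exists>m j v. j < length F0 \<and> translate_patch v P \<subseteq> (subst_ext (real (NN Q)) (rhoK Q k) ^^ m) {(j, 0)}"
proof -
  obtain M where M: "\<forall>p\<in>P. \<exists>a x y. p = (a, vp (real_of_int x) (real_of_int y)) \<and>
      (a, x) \<in> tiles1 (W Q k M) (wo Q M) \<and> \<bar>y\<bar> \<le> int M" using bound_patch[OF k P(2,1)] by blast
  define c where "c = 2 * int (NN Q) ^ M - wo Q M"
  define v where "v = vp (real_of_int c) (real_of_int (int M))"
  have "translate_patch v P \<subseteq> tiles2D (tiles1 (W Q k (Suc M)) 0) {0..<int (NN Q) ^ Suc M}"
  proof
    fix q assume "q \<in> translate_patch v P"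
    then obtain p where p: "p \<in> P" "q = (fst p, snd p + v)" unfolding translate_patch_def by auto
    obtain a x y where axy: "p = (a, vp (real_of_int x) (real_of_int y))" "(a, x) \<in> tiles1 (W Q k M) (wo Q M)"
      "\<bar>y\<bar> \<le> int M" using M p(1) by blast
    have q: "q = (a, vp (real_of_int (x + c)) (real_of_int (y + int M)))"
      using p(2) axy(1) unfolding v_def by (simp add: vp_add)
    have "(a, x + c) \<in> tiles1 (W Q k M) (wo Q M + c)" using axy(2) tiles1_shift[of a "x + c" _ "wo Q M" c] by simp
    moreover have "wo Q M + c = int (lenp (W Q k M))" unfolding c_def using lenp_W[OF k, of M] by simp
    ultimately have "(a, x + c) \<in> tiles1 (W Q k (Suc M)) 0"
      unfolding W_Suc2 tiles1_append by auto
    moreover have "y + int M \<in> {0..<int (NN Q) ^ Suc M}" using axy(3) two_M_less[of M Q] by auto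
    ultimately show "q \<in> tiles2D (tiles1 (W Q k (Suc M)) 0) {0..<int (NN Q) ^ Suc M}"
      unfolding q tiles2D_def by blast
  qed
  then show ?thesis using subst_iter[OF k, of "Suc M"] by (intro exI[of _ "Suc M"] exI[of _ 0] exI[of _ v]) simp
qed

lemma Tk_in_X: "k \<le> Q \<Longrightarrow> Tk Q k \<in> X_subst F0 (real (NN Q)) (rhoK Q k)"
  unfolding X_subst_def using is_tiling_Tk legal_Tk by blast



lemma count_rep: "count_list (replicate n a) x = (if a = x then n else 0)"
  by (induction n) auto

lemma count_sg: "k \<le> Q \<Longrightarrow> i < 2 \<Longrightarrow> j < 2 \<Longrightarrow> count_list (sg Q k j) i =
   (if j = 0 then (if i = 0 then Q + 3 else 2 * Q) else (if i = 0 then 1 else 2 * Q + 1))"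
  by (cases i; cases j) (auto simp: sg_def wA_def wB_def prefA_def restA_def count_rep)

lemma card_row: "card {t. (i, t) \<in> tiles2D S Y} = card {x. (i, x) \<in> S} * card Y"
proof -
  have eq: "{t. (i, t) \<in> tiles2D S Y} = (\<lambda>(x, y). vp (real_of_int x) (real_of_int y)) ` ({x. (i, x) \<in> S} \<times> Y)"
    unfolding tiles2D_def by force
  have "inj_on (\<lambda>(x, y). vp (real_of_int x) (real_of_int y)) ({x. (i, x) \<in> S} \<times> Y)"
    by (auto simp: inj_on_def)
  then show ?thesis unfolding eq by (simp add: card_image card_cartesian_product)
qed

lemma matrix_eq: "k \<le> Q \<Longrightarrow> subst_matrix (rhoK Q k) i j = count_list (sg Q k j) i * NN Q"
  unfolding subst_matrix_def rhoK_def card_row tiles1_count by simp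

lemma mat_pow_1: "i < n \<Longrightarrow> mat_pow n M (Suc 0) i j = M i j"
proof -
  assume i: "i < n"
  have "mat_pow n M (Suc 0) i j = (\<Sum>l<n. (if i = l then 1 else 0) * M l j)" by simp
  also have "\<dots> = (\<Sum>l<n. if l = i then M l j else 0)" by (rule sum.cong) auto
  also have "\<dots> = M i j" using i by simp
  finally show ?thesis .
qed

lemma primitive_rho: "Q \<ge> 1 \<Longrightarrow> k \<le> Q \<Longrightarrow> primitive F0 (rhoK Q k)"
  unfolding primitive_def
proof (intro exI[of _ "Suc 0"] allI impI)
  fix i j assume Q: "Q \<ge> 1" and k: "k \<le> Q" and i: "i < length F0" and j: "j < length F0"
  have "mat_pow (length F0) (subst_matrix (rhoK Q k)) (Suc 0) i j = subst_matrix (rhoK Q k) i j"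
    using i by (rule mat_pow_1)
  also have "\<dots> = count_list (sg Q k j) i * NN Q" by (rule matrix_eq[OF k])
  finally show "0 < mat_pow (length F0) (subst_matrix (rhoK Q k)) (Suc 0) i j"
    using count_sg[OF k, of i j] i j Q by (simp add: NN_def)
qed

lemma matrix_indep: "k \<le> Q \<Longrightarrow> l \<le> Q \<Longrightarrow> i < 2 \<Longrightarrow> j < 2 \<Longrightarrow>
   subst_matrix (rhoK Q k) i j = subst_matrix (rhoK Q l) i j"
  using matrix_eq count_sg by simp

lemma supp_rho:
  assumes k: "k \<le> Q" and a: "a < 2"
  shows "supp F0 (rhoK Q k a) = (\<lambda>x. real (NN Q) *\<^sub>R x) ` (F0 ! a)"
proof -
  let ?N = "real (NN Q)"
  have N1: "?N \<ge> 1" by (simp add: NN_def)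
  have ne: "cbox 0 (vp (real (tlen a)) 1) \<noteq> {}"
  proof -
    have "(0::pt) \<in> cbox 0 (vp (real (tlen a)) 1)" by (simp add: mem_cbox_pt vp_zero)
    then show ?thesis by blast
  qed
  have rhs: "(\<lambda>x. ?N *\<^sub>R x) ` (F0 ! a) = cbox 0 (vp (?N * real (tlen a)) ?N)"
    unfolding F0_nth[OF a] image_smult_cbox using ne N1 by (simp add: vp_scale)
  have lsg: "real (lenp (sg Q k a)) = ?N * real (tlen a)" using lenp_sg[OF k, of a] by simp
  have sgne: "sg Q k a \<noteq> []" by (simp add: sg_def wA_def wB_def prefA_def)
  show ?thesis
  proof (intro set_eqI)
    fix z :: pt
    have c1: "(\<exists>(b, x)\<in>tiles1 (sg Q k a) 0. real_of_int x \<le> z$1 \<and> z$1 \<le> real_of_int x + real (tlen b)) \<longleftrightarrow>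
       0 \<le> z$1 \<and> z$1 \<le> ?N * real (tlen a)"
    proof
      assume "\<exists>(b, x)\<in>tiles1 (sg Q k a) 0. real_of_int x \<le> z$1 \<and> z$1 \<le> real_of_int x + real (tlen b)"
      then obtain b x where bx: "(b, x) \<in> tiles1 (sg Q k a) 0" "real_of_int x \<le> z$1" "z$1 \<le> real_of_int x + real (tlen b)"
        by blast
      have "0 \<le> x" "x + int (tlen b) \<le> int (lenp (sg Q k a))" using tiles1_bounds[OF bx(1)] by auto
      then have "0 \<le> real_of_int x" "real_of_int x + real (tlen b) \<le> real (lenp (sg Q k a))"
        by (simp, metis of_int_le_iff of_int_add of_int_of_nat_eq)
      then show "0 \<le> z$1 \<and> z$1 \<le> ?N * real (tlen a)" using bx lsg by linarith
    next
      assume "0 \<le> z$1 \<and> z$1 \<le> ?N * real (tlen a)"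
      then show "\<exists>(b, x)\<in>tiles1 (sg Q k a) 0. real_of_int x \<le> z$1 \<and> z$1 \<le> real_of_int x + real (tlen b)"
        using tiles1_cover[OF sgne, of 0 "z$1"] lsg by simp
    qed
    have c2: "(\<exists>y\<in>{0..<int (NN Q)}. real_of_int y \<le> z$2 \<and> z$2 \<le> real_of_int y + 1) \<longleftrightarrow> 0 \<le> z$2 \<and> z$2 \<le> ?N"
    proof
      assume "\<exists>y\<in>{0..<int (NN Q)}. real_of_int y \<le> z$2 \<and> z$2 \<le> real_of_int y + 1"
      then obtain y where y: "0 \<le> y" "y + 1 \<le> int (NN Q)" "real_of_int y \<le> z$2" "z$2 \<le> real_of_int y + 1" by auto
      have "real_of_int (y + 1) \<le> real_of_int (int (NN Q))" using y(2) by (simp only: of_int_le_iff)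
      then show "0 \<le> z$2 \<and> z$2 \<le> ?N" using y by simp
    next
      assume z: "0 \<le> z$2 \<and> z$2 \<le> ?N"
      define y where "y = min \<lfloor>z$2\<rfloor> (int (NN Q) - 1)"
      have fl: "real_of_int \<lfloor>z$2\<rfloor> \<le> z$2" "z$2 < real_of_int \<lfloor>z$2\<rfloor> + 1" using floor_correct[of "z$2"] by auto
      have "0 \<le> \<lfloor>z$2\<rfloor>" using z by simp
      moreover have "int (NN Q) \<ge> 1" by (simp add: NN_def)
      ultimately have y0: "0 \<le> y" "y < int (NN Q)" unfolding y_def by auto
      have "y \<le> \<lfloor>z$2\<rfloor>" unfolding y_def by simp
      then have "real_of_int y \<le> real_of_int \<lfloor>z$2\<rfloor>" by (simp only: of_int_le_iff)
      then have "real_of_int y \<le> z$2" using fl by linarith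
      moreover have "z$2 \<le> real_of_int y + 1"
      proof (cases "\<lfloor>z$2\<rfloor> \<le> int (NN Q) - 1")
        case True then show ?thesis using fl unfolding y_def by (simp add: min_def)
      next
        case False then have "y = int (NN Q) - 1" unfolding y_def by simp
        then show ?thesis using z by simp
      qed
      ultimately show "\<exists>y\<in>{0..<int (NN Q)}. real_of_int y \<le> z$2 \<and> z$2 \<le> real_of_int y + 1" using y0 by auto
    qed
    show "z \<in> supp F0 (rhoK Q k a) \<longleftrightarrow> z \<in> (\<lambda>x. ?N *\<^sub>R x) ` (F0 ! a)"
      unfolding rhs rhoK_def supp_tiles2D[OF Let2_tiles1_sg] mem_cbox_pt using c1 c2
      by (simp add: vp_zero)
  qed
qed

lemma subst_rule_rho: "k \<le> Q \<Longrightarrow> subst_rule F0 (real (NN Q)) (rhoK Q k)"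
  unfolding subst_rule_def
proof (intro conjI allI impI)
  assume k: "k \<le> Q"
  show "1 < real (NN Q)" by (simp add: NN_def)
  fix i assume i: "i < length F0"
  show "is_patch F0 (rhoK Q k i)" unfolding is_patch_def rhoK_def
    using tiles2D_finite[of "tiles1 (sg Q k i) 0" "{0..<int (NN Q)}"]
      tess_tiles2D[OF Let2_tiles1_sg Sep_tiles1] by simp
  show "supp F0 (rhoK Q k i) = (\<lambda>x. real (NN Q) *\<^sub>R x) ` (F0 ! i)" using supp_rho[OF k] i by simp
qed



definition Rect :: "real \<Rightarrow> real \<Rightarrow> real \<Rightarrow> real \<Rightarrow> pt set" where
  "Rect a b c d = {z. a \<le> z$1 \<and> z$1 \<le> b \<and> c \<le> z$2 \<and> z$2 \<le> d}"

definition rowsMeet :: "real \<Rightarrow> real \<Rightarrow> int set" where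
  "rowsMeet c d = {y. real_of_int y \<le> d \<and> c \<le> real_of_int y + 1}"

lemma tiles2D_inj: "inj_on (\<lambda>((a, x), y). (a, vp (real_of_int x) (real_of_int y))) (A \<times> Y)"
  by (auto simp: inj_on_def)

lemma tiles2D_img: "tiles2D A Y = (\<lambda>((a, x), y). (a, vp (real_of_int x) (real_of_int y))) ` (A \<times> Y)"
  unfolding tiles2D_def by force

lemma card_tiles2D: "card (tiles2D A Y) = card A * card Y"
  unfolding tiles2D_img by (subst card_image[OF tiles2D_inj]) (simp add: card_cartesian_product)

lemma rowsMeet_sub: "rowsMeet c d \<subseteq> {\<lceil>c\<rceil> - 1 .. \<lfloor>d\<rfloor>}"
proof
  fix y assume "y \<in> rowsMeet c d"
  then have "real_of_int y \<le> d" "c \<le> real_of_int (y + 1)" unfolding rowsMeet_def by auto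
  then show "y \<in> {\<lceil>c\<rceil> - 1 .. \<lfloor>d\<rfloor>}" by (simp add: le_floor_iff ceiling_le_iff) linarith
qed

lemma rowsMeet_finite: "finite (rowsMeet c d)"
  using rowsMeet_sub finite_subset by blast

lemma rowsMeet_card: "c \<le> d \<Longrightarrow> real (card (rowsMeet c d)) \<le> d - c + 2"
proof -
  assume cd: "c \<le> d"
  have "card (rowsMeet c d) \<le> card {\<lceil>c\<rceil> - 1 .. \<lfloor>d\<rfloor>}" by (rule card_mono[OF _ rowsMeet_sub]) simp
  then have "real (card (rowsMeet c d)) \<le> real (nat (\<lfloor>d\<rfloor> - (\<lceil>c\<rceil> - 1) + 1))" by simp
  also have "\<dots> \<le> d - c + 2"
  proof -
    have f: "real_of_int \<lfloor>d\<rfloor> \<le> d" "c \<le> real_of_int \<lceil>c\<rceil>" by auto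
    have "\<lfloor>d\<rfloor> - (\<lceil>c\<rceil> - 1) + 1 \<ge> 0"
    proof -
      have "\<lceil>c\<rceil> \<le> \<lfloor>d\<rfloor> + 1" using cd f by (metis ceiling_le_iff le_floor_iff floor_le_ceiling order_trans
           add.commute ceiling_less_iff less_eq_real_def linorder_not_le of_int_add of_int_1 real_of_int_floor_add_one_gt)
      then show ?thesis by linarith
    qed
    then have "real (nat (\<lfloor>d\<rfloor> - (\<lceil>c\<rceil> - 1) + 1)) = real_of_int (\<lfloor>d\<rfloor> - (\<lceil>c\<rceil> - 1) + 1)" by simp
    then show ?thesis using f by linarith
  qed
  finally show ?thesis .
qed

lemma rows_card: "card {0..<int H} = H" by simp

lemma inside_tiles:
  assumes k: "k \<le> Q"
  shows "tiles2D (in1 (S1 Q k) a b) {0..<int H} \<subseteq> {p\<in>Tk Q k. placed F0 p \<subseteq> Rect a b 0 (real H)}"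
proof
  fix p assume "p \<in> tiles2D (in1 (S1 Q k) a b) {0..<int H}"
  then obtain s x y where p: "p = (s, vp (real_of_int x) (real_of_int y))" "(s, x) \<in> in1 (S1 Q k) a b" "y \<in> {0..<int H}"
    unfolding tiles2D_def by auto
  have s: "s < 2" using p(2) S1_letters unfolding in1_def by auto
  have xb: "a \<le> real_of_int x" "real_of_int x + real (tlen s) \<le> b" "(s, x) \<in> S1 Q k" using p(2) unfolding in1_def by auto
  have yb: "0 \<le> real_of_int y" "real_of_int y + 1 \<le> real H"
  proof -
    show "0 \<le> real_of_int y" using p(3) by simp
    have "y + 1 \<le> int H" using p(3) by simp
    then have "real_of_int (y + 1) \<le> real_of_int (int H)" by (simp only: of_int_le_iff)
    then show "real_of_int y + 1 \<le> real H" by simp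
  qed
  have "placed F0 p \<subseteq> Rect a b 0 (real H)"
    unfolding p(1) Rect_def using mem_placed[OF s] xb yb by fastforce
  moreover have "p \<in> Tk Q k" unfolding Tk_def tiles2D_def p(1) using xb(3) by auto
  ultimately show "p \<in> {p\<in>Tk Q k. placed F0 p \<subseteq> Rect a b 0 (real H)}" by simp
qed

lemma meeting_tiles:
  shows "{p\<in>Tk Q l. placed F0 p \<inter> Rect a b c d \<noteq> {}} \<subseteq> tiles2D (meet1 (S1 Q l) a b) (rowsMeet c d)"
proof
  fix p assume "p \<in> {p\<in>Tk Q l. placed F0 p \<inter> Rect a b c d \<noteq> {}}"
  then obtain s x y z where p: "p = (s, vp (real_of_int x) (real_of_int y))" "(s, x) \<in> S1 Q l"
    "z \<in> placed F0 p" "z \<in> Rect a b c d"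
    unfolding Tk_def tiles2D_def by auto
  have s: "s < 2" using p(2) S1_letters by auto
  have zz: "real_of_int x \<le> z$1" "z$1 \<le> real_of_int x + real (tlen s)" "real_of_int y \<le> z$2" "z$2 \<le> real_of_int y + 1"
    using p(3) unfolding p(1) mem_placed[OF s] by auto
  have "(s, x) \<in> meet1 (S1 Q l) a b" using p(2,4) zz unfolding meet1_def Rect_def by auto
  moreover have "y \<in> rowsMeet c d" using p(4) zz unfolding rowsMeet_def Rect_def by auto
  ultimately show "p \<in> tiles2D (meet1 (S1 Q l) a b) (rowsMeet c d)" unfolding p(1) tiles2D_def by auto
qed

lemma limit_lemma:
  fixes A B C \<alpha> :: real
  assumes al: "\<alpha> > 0" and B: "B \<ge> 0" and C: "C \<ge> 0"
    and H: "\<And>H::nat. H \<ge> 1 \<Longrightarrow> real H * A \<le> B * ((real H + 2 * C) / \<alpha> + 2)"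
  shows "\<alpha> * A \<le> B"
proof (rule ccontr)
  assume "\<not> \<alpha> * A \<le> B"
  then have d: "A - B / \<alpha> > 0" using al by (simp add: field_simps)
  define K where "K = B * (2 * C / \<alpha> + 2)"
  obtain n :: nat where n: "K / (A - B / \<alpha>) < real n" using reals_Archimedean2 by blast
  define H where "H = Suc n"
  have H1: "H \<ge> 1" unfolding H_def by simp
  have "K < real n * (A - B / \<alpha>)" using n d by (simp add: pos_divide_less_eq)
  also have "\<dots> \<le> real H * (A - B / \<alpha>)" using d unfolding H_def by (intro mult_right_mono) auto
  finally have k1: "K < real H * (A - B / \<alpha>)" .
  have k2: "real H * A \<le> real H * (B / \<alpha>) + K"
    using H[OF H1] al unfolding K_def by (simp add: field_simps)
  have "real H * (A - B / \<alpha>) = real H * A - real H * (B / \<alpha>)" by (simp add: right_diff_distrib)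
  then show False using k1 k2 by linarith
qed



lemma comp_le_norm: "\<bar>(x::pt)$i - y$i\<bar> \<le> norm (x - y)"
  using component_le_norm_cart[of "x - y" i] by simp

lemma BD_1D:
  assumes k: "k \<le> Q" and l: "l \<le> Q"
    and c: "inj_on c (Tk Q k)" "\<forall>p\<in>Tk Q k. c p \<in> placed F0 p"
    and c': "\<forall>p\<in>Tk Q l. c' p \<in> placed F0 p"
    and al: "\<alpha> > 0" and C0: "C \<ge> 0"
    and phi_inj: "inj_on \<phi> (c ` Tk Q k)"
    and phi_img: "\<phi> ` (c ` Tk Q k) \<subseteq> (\<lambda>x. \<alpha> *\<^sub>R x) ` (c' ` Tk Q l)"
    and disp: "\<forall>x\<in>c ` Tk Q k. norm (x - \<phi> x) \<le> C"
    and ab: "a \<le> b"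
  shows "\<alpha> * real (card (in1 (S1 Q k) a b)) \<le> real (card (meet1 (S1 Q l) ((a - C) / \<alpha>) ((b + C) / \<alpha>)))"
proof (rule limit_lemma[OF al _ C0])
  let ?A = "in1 (S1 Q k) a b" and ?B = "meet1 (S1 Q l) ((a - C) / \<alpha>) ((b + C) / \<alpha>)"
  show "real (card ?B) \<ge> 0" by simp
  fix H :: nat assume H1: "H \<ge> 1"
  let ?L = "c ` Tk Q k"
  define R where "R = Rect a b 0 (real H)"
  define R' where "R' = Rect ((a - C) / \<alpha>) ((b + C) / \<alpha>) (- C / \<alpha>) ((real H + C) / \<alpha>)"
  define M' where "M' = {p\<in>Tk Q l. placed F0 p \<inter> R' \<noteq> {}}"
  define Ts where "Ts = tiles2D ?B (rowsMeet (- C / \<alpha>) ((real H + C) / \<alpha>))"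
  have M'Ts: "M' \<subseteq> Ts" unfolding M'_def Ts_def R'_def by (rule meeting_tiles)
  have finTs: "finite Ts" unfolding Ts_def by (intro tiles2D_finite meet1_finite[OF l] rowsMeet_finite)
  have finM': "finite M'" using M'Ts finTs finite_subset by blast
  have img: "\<phi> ` (?L \<inter> R) \<subseteq> (\<lambda>x. \<alpha> *\<^sub>R x) ` (c' ` M')"
  proof
    fix w assume "w \<in> \<phi> ` (?L \<inter> R)"
    then obtain x where x: "x \<in> ?L" "x \<in> R" "w = \<phi> x" by auto
    obtain p where p: "p \<in> Tk Q l" "\<phi> x = \<alpha> *\<^sub>R c' p" using phi_img x(1) by blast
    have d: "norm (x - \<phi> x) \<le> C" using disp x(1) by blast
    have d1: "\<bar>x$1 - (\<phi> x)$1\<bar> \<le> C" "\<bar>x$2 - (\<phi> x)$2\<bar> \<le> C" using comp_le_norm[where x=x and y="\<phi> x" and i=1] comp_le_norm[where x=x and y="\<phi> x" and i=2] d by linarith+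
    have xr: "a \<le> x$1" "x$1 \<le> b" "0 \<le> x$2" "x$2 \<le> real H" using x(2) unfolding R_def Rect_def by auto
    have cp: "(c' p)$1 = (\<phi> x)$1 / \<alpha>" "(c' p)$2 = (\<phi> x)$2 / \<alpha>" using p(2) al by auto
    have e: "a - C \<le> (\<phi> x)$1" "(\<phi> x)$1 \<le> b + C" "- C \<le> (\<phi> x)$2" "(\<phi> x)$2 \<le> real H + C"
      using d1 xr by linarith+
    have "(a - C) / \<alpha> \<le> (\<phi> x)$1 / \<alpha>" "(\<phi> x)$1 / \<alpha> \<le> (b + C) / \<alpha>"
      "- C / \<alpha> \<le> (\<phi> x)$2 / \<alpha>" "(\<phi> x)$2 / \<alpha> \<le> (real H + C) / \<alpha>"
      using e al by (intro divide_right_mono; simp)+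
    then have "c' p \<in> R'"
      unfolding R'_def Rect_def using cp by simp
    moreover have "c' p \<in> placed F0 p" using c' p(1) by blast
    ultimately have "p \<in> M'" unfolding M'_def using p(1) by blast
    then show "w \<in> (\<lambda>x. \<alpha> *\<^sub>R x) ` (c' ` M')" using x(3) p(2) by blast
  qed
  have fin_img: "finite ((\<lambda>x. \<alpha> *\<^sub>R x) ` (c' ` M'))" using finM' by simp
  have injLR: "inj_on \<phi> (?L \<inter> R)" using phi_inj inj_on_subset by blast
  have finLR: "finite (?L \<inter> R)"
    using finite_imageD[OF finite_subset[OF img fin_img] injLR] .
  have "card (?L \<inter> R) \<le> card ((\<lambda>x. \<alpha> *\<^sub>R x) ` (c' ` M'))"
    by (rule card_inj_on_le[OF injLR img fin_img])
  also have "\<dots> \<le> card (c' ` M')" by (rule card_image_le) (use finM' in simp)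
  also have "\<dots> \<le> card M'" by (rule card_image_le[OF finM'])
  also have "\<dots> \<le> card Ts" by (rule card_mono[OF finTs M'Ts])
  also have "\<dots> = card ?B * card (rowsMeet (- C / \<alpha>) ((real H + C) / \<alpha>))" unfolding Ts_def by (rule card_tiles2D)
  finally have up: "card (?L \<inter> R) \<le> card ?B * card (rowsMeet (- C / \<alpha>) ((real H + C) / \<alpha>))" .
  have sub: "tiles2D ?A {0..<int H} \<subseteq> Tk Q k" using inside_tiles[OF k] by blast
  have "card (tiles2D ?A {0..<int H}) \<le> card (?L \<inter> R)"
  proof (rule card_inj_on_le[OF _ _ finLR])
    show "inj_on c (tiles2D ?A {0..<int H})" using c(1) sub inj_on_subset by blast
    show "c ` tiles2D ?A {0..<int H} \<subseteq> ?L \<inter> R"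
    proof
      fix w assume "w \<in> c ` tiles2D ?A {0..<int H}"
      then obtain p where p: "p \<in> tiles2D ?A {0..<int H}" "w = c p" by auto
      have "placed F0 p \<subseteq> R" using inside_tiles[OF k] p(1) unfolding R_def by blast
      moreover have "c p \<in> placed F0 p" using c(2) sub p(1) by blast
      ultimately show "w \<in> ?L \<inter> R" using p sub by blast
    qed
  qed
  then have lo: "card ?A * H \<le> card (?L \<inter> R)" unfolding card_tiles2D rows_card .
  have cd: "- C / \<alpha> \<le> (real H + C) / \<alpha>" using C0 al by (intro divide_right_mono) auto
  have rows: "real (card (rowsMeet (- C / \<alpha>) ((real H + C) / \<alpha>))) \<le> (real H + 2 * C) / \<alpha> + 2"
  proof -
    have "real (card (rowsMeet (- C / \<alpha>) ((real H + C) / \<alpha>))) \<le> (real H + C) / \<alpha> - (- C / \<alpha>) + 2"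
      by (rule rowsMeet_card[OF cd])
    also have "(real H + C) / \<alpha> - (- C / \<alpha>) = (real H + 2 * C) / \<alpha>" using al by (simp add: field_simps)
    finally show ?thesis .
  qed
  have "real (card ?A * H) \<le> real (card ?B * card (rowsMeet (- C / \<alpha>) ((real H + C) / \<alpha>)))"
    using lo up by linarith
  then have "real H * real (card ?A) \<le> real (card ?B) * real (card (rowsMeet (- C / \<alpha>) ((real H + C) / \<alpha>)))"
    by (simp add: mult.commute)
  also have "\<dots> \<le> real (card ?B) * ((real H + 2 * C) / \<alpha> + 2)" using rows by (intro mult_left_mono) auto
  finally show "real H * real (card ?A) \<le> real (card ?B) * ((real H + 2 * C) / \<alpha> + 2)" .
qed



lemma nonBD:
  assumes Q: "Q \<ge> 1" and k: "k \<le> Q" and l: "l \<le> Q" and kl: "k \<noteq> l"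
    and A: "associated_delone F0 (Tk Q k) L" and A': "associated_delone F0 (Tk Q l) L'"
  shows "\<not> BD_equiv L L'"
proof
  assume "BD_equiv L L'"
  then obtain \<alpha> \<phi> C where al: "\<alpha> > 0" and bij: "bij_betw \<phi> L ((\<lambda>x. \<alpha> *\<^sub>R x) ` L')"
    and C: "\<forall>x\<in>L. norm (x - \<phi> x) \<le> C" unfolding BD_equiv_def by blast
  obtain c where c: "inj_on c (Tk Q k)" "\<forall>p\<in>Tk Q k. c p \<in> placed F0 p" "L = c ` Tk Q k"
    using A unfolding associated_delone_def by blast
  obtain c' where c': "inj_on c' (Tk Q l)" "\<forall>p\<in>Tk Q l. c' p \<in> placed F0 p" "L' = c' ` Tk Q l"
    using A' unfolding associated_delone_def by blast
  define C0 where "C0 = max C 0"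
  have C0: "C0 \<ge> 0" unfolding C0_def by simp
  have disp: "\<forall>x\<in>c ` Tk Q k. norm (x - \<phi> x) \<le> C0" using C c(3) unfolding C0_def by force
  have phi_inj: "inj_on \<phi> (c ` Tk Q k)" using bij c(3) bij_betw_imp_inj_on by blast
  have phi_surj: "\<phi> ` L = (\<lambda>x. \<alpha> *\<^sub>R x) ` L'" using bij bij_betw_imp_surj_on by blast
  have phi_img: "\<phi> ` (c ` Tk Q k) \<subseteq> (\<lambda>x. \<alpha> *\<^sub>R x) ` (c' ` Tk Q l)" using phi_surj c(3) c'(3) by simp
  have H1: "\<alpha> * real (card (in1 (S1 Q k) a b)) \<le> real (card (meet1 (S1 Q l) ((a - C0) / \<alpha>) ((b + C0) / \<alpha>)))"
    if "a \<le> b" for a b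
    using BD_1D[OF k l c(1,2) c'(2) al C0 phi_inj phi_img disp that] .
  define \<psi> where "\<psi> = (\<lambda>y. (1 / \<alpha>) *\<^sub>R inv_into L \<phi> (\<alpha> *\<^sub>R y))"
  have inL: "inv_into L \<phi> (\<alpha> *\<^sub>R y) \<in> L" and finv: "\<phi> (inv_into L \<phi> (\<alpha> *\<^sub>R y)) = \<alpha> *\<^sub>R y" if "y \<in> L'" for y
  proof -
    have "\<alpha> *\<^sub>R y \<in> \<phi> ` L" using phi_surj that by blast
    then show "inv_into L \<phi> (\<alpha> *\<^sub>R y) \<in> L" "\<phi> (inv_into L \<phi> (\<alpha> *\<^sub>R y)) = \<alpha> *\<^sub>R y"
      by (auto intro: inv_into_into f_inv_into_f)
  qed
  have psi_inj: "inj_on \<psi> (c' ` Tk Q l)"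
  proof (rule inj_onI)
    fix y1 y2 assume y: "y1 \<in> c' ` Tk Q l" "y2 \<in> c' ` Tk Q l" "\<psi> y1 = \<psi> y2"
    then have "inv_into L \<phi> (\<alpha> *\<^sub>R y1) = inv_into L \<phi> (\<alpha> *\<^sub>R y2)" using al unfolding \<psi>_def by simp
    then have "\<phi> (inv_into L \<phi> (\<alpha> *\<^sub>R y1)) = \<phi> (inv_into L \<phi> (\<alpha> *\<^sub>R y2))" by simp
    then have "\<alpha> *\<^sub>R y1 = \<alpha> *\<^sub>R y2" using finv y(1,2) c'(3) by simp
    then show "y1 = y2" using al by simp
  qed
  have psi_img: "\<psi> ` (c' ` Tk Q l) \<subseteq> (\<lambda>x. (1 / \<alpha>) *\<^sub>R x) ` (c ` Tk Q k)"
    using inL c(3) c'(3) unfolding \<psi>_def by blast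
  have psi_disp: "\<forall>y\<in>c' ` Tk Q l. norm (y - \<psi> y) \<le> C0 / \<alpha>"
  proof
    fix y assume y: "y \<in> c' ` Tk Q l"
    define x where "x = inv_into L \<phi> (\<alpha> *\<^sub>R y)"
    have x: "x \<in> L" "\<phi> x = \<alpha> *\<^sub>R y" using inL finv y c'(3) unfolding x_def by auto
    have "y - \<psi> y = (1 / \<alpha>) *\<^sub>R (\<phi> x - x)" unfolding \<psi>_def x_def[symmetric] x(2) using al
      by (simp add: algebra_simps)
    then have "norm (y - \<psi> y) = norm (x - \<phi> x) / \<alpha>" using al by (simp add: norm_minus_commute)
    also have "\<dots> \<le> C0 / \<alpha>"
    proof -
      have "norm (x - \<phi> x) \<le> C0" using disp x(1) c(3) by blast
      then show ?thesis using al by (intro divide_right_mono) auto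
    qed
    finally show "norm (y - \<psi> y) \<le> C0 / \<alpha>" .
  qed
  have al': "1 / \<alpha> > 0" using al by simp
  have C0': "C0 / \<alpha> \<ge> 0" using C0 al by simp
  have H2: "1 / \<alpha> * real (card (in1 (S1 Q l) a b)) \<le>
      real (card (meet1 (S1 Q k) ((a - C0 / \<alpha>) / (1 / \<alpha>)) ((b + C0 / \<alpha>) / (1 / \<alpha>))))"
    if "a \<le> b" for a b
    using BD_1D[OF l k c'(1,2) c(2) al' C0' psi_inj psi_img psi_disp that] .
  have sX: "sM Q M \<le> sM Q M + XM Q M" for M using XM_le(2)[of Q M] by simp
  have a1: "\<alpha> \<le> 1" using core_A[OF Q k l C0 al H1[OF sX]] .
  have a2: "1 / \<alpha> \<le> 1" using core_A[OF Q l k C0' al' H2[OF sX]] .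
  have a: "\<alpha> = 1" using a1 a2 al by (simp add: field_simps)
  have B1: "(real k - real l) * (real Q + 1)^M \<le> 2 * C0 + 8" for M
    using core_B[OF k l C0, of M] H1[OF sX, of M] a by simp
  have B2: "(real l - real k) * (real Q + 1)^M \<le> 2 * C0 + 8" for M
    using core_B[OF l k C0, of M] H2[OF sX, of M] a by simp
  obtain M where M: "2 * C0 + 8 < (real Q + 1) ^ M" using real_arch_pow[of "real Q + 1" "2 * C0 + 8"] Q by auto
  have "1 \<le> \<bar>real k - real l\<bar>" using kl by linarith
  then have "(real Q + 1)^M \<le> \<bar>real k - real l\<bar> * (real Q + 1)^M" by (simp add: mult_le_cancel_right1)
  moreover have "\<bar>real k - real l\<bar> * (real Q + 1)^M \<le> 2 * C0 + 8"
    using B1[of M] B2[of M] by (cases "real k \<ge> real l") (auto simp: abs_if algebra_simps)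
  ultimately show False using M by linarith
qed

theorem theorem1p4:
  shows "\<exists>F. prototiles F \<and>
    (\<forall>q::nat. \<exists>(xi :: nat \<Rightarrow> real) (rho :: nat \<Rightarrow> nat \<Rightarrow> (nat \<times> pt) set) (T :: nat \<Rightarrow> (nat \<times> pt) set).
       (\<forall>k<q. subst_rule F (xi k) (rho k) \<and> primitive F (rho k) \<and> T k \<in> X_subst F (xi k) (rho k)) \<and>
       (\<forall>k<q. \<forall>l<q. \<forall>i<length F. \<forall>j<length F. subst_matrix (rho k) i j = subst_matrix (rho l) i j) \<and>
       (\<forall>k<q. \<forall>l<q. k \<noteq> l \<longrightarrow> (\<forall>L L'. associated_delone F (T k) L \<and> associated_delone F (T l) L' \<longrightarrow>
           \<not> BD_equiv L L')))"
proof (intro exI[of _ F0] conjI allI prototiles_F0)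
  fix q :: nat
  define Q where "Q = Suc q"
  have Q: "Q \<ge> 1" unfolding Q_def by simp
  have kQ: "k < q \<Longrightarrow> k \<le> Q" for k unfolding Q_def by simp
  show "\<exists>(xi :: nat \<Rightarrow> real) (rho :: nat \<Rightarrow> nat \<Rightarrow> (nat \<times> pt) set) (T :: nat \<Rightarrow> (nat \<times> pt) set).
       (\<forall>k<q. subst_rule F0 (xi k) (rho k) \<and> primitive F0 (rho k) \<and> T k \<in> X_subst F0 (xi k) (rho k)) \<and>
       (\<forall>k<q. \<forall>l<q. \<forall>i<length F0. \<forall>j<length F0. subst_matrix (rho k) i j = subst_matrix (rho l) i j) \<and>
       (\<forall>k<q. \<forall>l<q. k \<noteq> l \<longrightarrow> (\<forall>L L'. associated_delone F0 (T k) L \<and> associated_delone F0 (T l) L' \<longrightarrow>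
           \<not> BD_equiv L L'))"
  proof (intro exI[of _ "\<lambda>k. real (NN Q)"] exI[of _ "rhoK Q"] exI[of _ "Tk Q"] conjI allI impI)
    fix k assume k: "k < q"
    show "subst_rule F0 (real (NN Q)) (rhoK Q k)" using subst_rule_rho kQ[OF k] .
    show "primitive F0 (rhoK Q k)" using primitive_rho[OF Q kQ[OF k]] .
    show "Tk Q k \<in> X_subst F0 (real (NN Q)) (rhoK Q k)" using Tk_in_X[OF kQ[OF k]] .
  next
    fix k l i j assume "k < q" "l < q" "i < length F0" "j < length F0"
    then show "subst_matrix (rhoK Q k) i j = subst_matrix (rhoK Q l) i j"
      using matrix_indep kQ by simp
  next
    fix k l L L' assume "k < q" "l < q" "k \<noteq> l"
      "associated_delone F0 (Tk Q k) L \<and> associated_delone F0 (Tk Q l) L'"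
    then show "\<not> BD_equiv L L'" using nonBD[OF Q] kQ by blast
  qed
qed

end
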